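(* Let $\Lambda\subset\mathbb Z^d$ be finite. For every boundary condition $(\xi,\mathsf b)$ on $\Lambda$, every external field $\mathsf h\in(\mathbb R^+)^\Lambda$ and every $\beta\geq0$, \[ \mathrm d\Psi^{(\xi,\mathsf b)}_{\Lambda,\beta,\mathsf h}[(\omega,\mathsf a)]=\boldsymbol\phi^\xi_{\Lambda,\beta,\mathsf h,\mathsf a}[\omega]\,\mathrm d\mu^{(\xi,\mathsf b)}_{\Lambda,\beta,\mathsf h}(\mathsf a), \] where $\mu^{(\xi,\mathsf b)}_{\Lambda,\beta,\mathsf h}$ is the $\mathsf a$-marginal of $\Psi^{(\xi,\mathsf b)}_{\Lambda,\beta,\mathsf h}$, and \[ \mathrm d\mu^{(\xi,\mathsf b)}_{\Lambda,\beta,\mathsf h}(\mathsf a)=2\,\mathbb 1_{\mathsf a|_{\partial^{\rm ext}\Lambda}=\mathsf b}\frac{Z^{\rm Ising,\xi}_{\Lambda,\beta,\mathsf h,\mathsf a}}{Z^{(\xi,\mathsf b)}_{\Lambda,\beta,\mathsf h}}\prod_{x\in\Lambda}\mathrm d\tilde\rho(\mathsf a_x). \] Moreover, $\mu^0_{\Lambda,\beta,\mathsf h}$ (the case of free boundary condition) is the law of the absolute value field $(|\varphi_x|)_{x\in\Lambda}$ under the $\varphi^4$ measure $\nu_{\Lambda,\beta,\mathsf h}$.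
   Context: Fix $g>0,a\in\mathbb R$; $\rho_{g,a}$ has density $\propto e^{-gt^4-at^2}$ on $\mathbb R$ and $\tilde\rho$ is the law of $|X|$, $X\sim\rho_{g,a}$. For finite $\Lambda$, $\nu_{\Lambda,\beta,\mathsf h}$ is the probability measure on $\mathbb R^\Lambda$ with density $\propto\exp(\beta\sum_{xy\in E(\Lambda)}\varphi_x\varphi_y+\beta\sum_{x}\mathsf h_x\varphi_x)\prod_x\mathrm d\rho_{g,a}(\varphi_x)$, $E(\Lambda)$ the nearest-neighbour edges inside $\Lambda$. Let $\partial^{\rm ext}\Lambda=\{x\notin\Lambda:\exists y\in\Lambda,y\sim x\}$, $\overline\Lambda=\Lambda\cup\partial^{\rm ext}\Lambda$, $\overline E(\Lambda)$ the nearest-neighbour edges with at least one endpoint in $\Lambda$. Given $\mathsf h\in(\mathbb R^+)^\Lambda$, add a ghost vertex $\mathfrak g$ and set $\overline E(\Lambda[\mathsf h])=\overline E(\Lambda)\cup\{x\mathfrak g: x\in\Lambda,\mathsf h_x\neq0\}$. A boundary condition is $(\xi,\mathsf b)$: $\xi$ a partition of $\partial^{\rm ext}\Lambda$, $\mathsf b\in(\mathbb R^+)^{\partial^{\rm ext}\Lambda}$; free means $\xi$ all singletons and $\mathsf b\equiv0$. For $\omega\in\{0,1\}^{\overline E(\Lambda[\mathsf h])}$, $k^\xi(\omega)$ is the number of connected components of the graph on $\overline\Lambda\cup\{\mathfrak g\}$ with edges $\{e:\omega_e=1\}$ after identifying the vertices within each class of $\xi$. Write $p(\beta,\mathsf a)_{xy}=1-e^{-2\beta\mathsf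 a_x\mathsf a_y}$ and $p(\beta,\mathsf h,\mathsf a)_{x\mathfrak g}=1-e^{-2\beta\mathsf h_x\mathsf a_x}$. $\Psi^{(\xi,\mathsf b)}_{\Lambda,\beta,\mathsf h}$ is the probability measure on $(\omega,\mathsf a)\in\{0,1\}^{\overline E(\Lambda[\mathsf h])}\times(\mathbb R^+)^{\overline\Lambda}$ given by $\mathrm d\Psi=\frac{\mathbb 1_{\mathsf a|_{\partial^{\rm ext}\Lambda}=\mathsf b}}{Z^{(\xi,\mathsf b)}_{\Lambda,\beta,\mathsf h}}\prod_{xy\in\overline E(\Lambda)}\sqrt{1-p_{xy}}\big(\tfrac{p_{xy}}{1-p_{xy}}\big)^{\omega_{xy}}\prod_{x\in\Lambda:\mathsf h_x\ne0}\sqrt{1-p_{x\mathfrak g}}\big(\tfrac{p_{x\mathfrak g}}{1-p_{x\mathfrak g}}\big)^{\omega_{x\mathfrak g}}2^{k^\xi(\omega)}\prod_{x\in\Lambda}\mathrm d\tilde\rho(\mathsf a_x)$, with $Z^{(\xi,\mathsf b)}_{\Lambda,\beta,\mathsf h}$ the normalisation constant. For $\mathsf a\in(\mathbb R^+)^{\overline\Lambda}$, $\boldsymbol\phi^\xi_{\Lambda,\beta,\mathsf h,\mathsf a}$ is the probability measure on $\{0,1\}^{\overline E(\Lambda[\mathsf h])}$ with weights proportional to $\prod_{xy\in\overline E(\Lambda)}\big(\frac{p(\beta,\mathsf a)_{xy}}{1-p(\beta,\mathsf a)_{xy}}\big)^{\omega_{xy}}\prod_{x}\big(\frac{p(\beta,\mathsf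 h,\mathsf a)_{x\mathfrak g}}{1-p(\beta,\mathsf h,\mathsf a)_{x\mathfrak g}}\big)^{\omega_{x\mathfrak g}}2^{k^\xi(\omega)}$. $Z^{\rm Ising,\xi}_{\Lambda,\beta,\mathsf h,\mathsf a}=\sum_{\sigma}\exp\big(\beta\sum_{xy\in\overline E(\Lambda)}\mathsf a_x\mathsf a_y\sigma_x\sigma_y+\beta\sum_{x\in\Lambda}\mathsf h_x\mathsf a_x\sigma_x\big)$, the sum over $\sigma\in\{\pm1\}^{\overline\Lambda}$ constant on each class of $\xi$. *)

theory Defs
  imports "HOL-Probability.Probability" "HOL-Library.Disjoint_Sets"
begin

type_synonym 'd site = "int ^ 'd"
type_synonym 'd vtx = "'d site option"   (* None = ghost vertex g *)
type_synonym 'd edge = "'d vtx set"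

definition phi4_density :: "real \<Rightarrow> real \<Rightarrow> real \<Rightarrow> real" where
  "phi4_density g a t = exp (- g * t ^ 4 - a * t ^ 2)"

definition rho :: "real \<Rightarrow> real \<Rightarrow> real measure" where
  "rho g a = density lborel (\<lambda>t. ennreal (phi4_density g a t /
      (\<integral>s. phi4_density g a s \<partial>lborel)))"

definition rho_tilde :: "real \<Rightarrow> real \<Rightarrow> real measure" where
  "rho_tilde g a = distr (rho g a) borel abs"

definition adj :: "'d::finite site \<Rightarrow> 'd site \<Rightarrow> bool" where
  "adj x y \<longleftrightarrow> (\<Sum>i\<in>UNIV. \<bar>x $ i - y $ i\<bar>) = 1"

definition ext_bd :: "'d::finite site set \<Rightarrow> 'd site set" where
  "ext_bd \<Lambda> = {x. x \<notin> \<Lambda> \<and> (\<exists>y\<in>\<Lambda>. adj y x)}"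

definition Lbar :: "'d::finite site set \<Rightarrow> 'd site set" where
  "Lbar \<Lambda> = \<Lambda> \<union> ext_bd \<Lambda>"

definition inner_edges :: "'d::finite site set \<Rightarrow> 'd edge set" where
  "inner_edges \<Lambda> = {{Some x, Some y} | x y. x \<in> \<Lambda> \<and> y \<in> \<Lambda> \<and> adj x y}"

definition bar_edges :: "'d::finite site set \<Rightarrow> 'd edge set" where
  "bar_edges \<Lambda> = {{Some x, Some y} | x y. x \<in> \<Lambda> \<and> adj x y}"

definition ghost_edges :: "'d::finite site set \<Rightarrow> ('d site \<Rightarrow> real) \<Rightarrow> 'd edge set" where
  "ghost_edges \<Lambda> h = {{Some x, None} | x. x \<in> \<Lambda> \<and> h x \<noteq> 0}"

definition all_edges :: "'d::finite site set \<Rightarrow> ('d site \<Rightarrow> real) \<Rightarrow> 'd edge set" where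
  "all_edges \<Lambda> h = bar_edges \<Lambda> \<union> ghost_edges \<Lambda> h"

definition verts :: "'d::finite site set \<Rightarrow> 'd vtx set" where
  "verts \<Lambda> = Some ` Lbar \<Lambda> \<union> {None}"

definition configs :: "'d edge set \<Rightarrow> ('d edge \<Rightarrow> bool) set" where
  "configs E = PiE E (\<lambda>_. UNIV)"

definition num_clusters ::
  "'d::finite site set \<Rightarrow> 'd site set set \<Rightarrow> 'd edge set \<Rightarrow> ('d edge \<Rightarrow> bool) \<Rightarrow> nat" where
  "num_clusters \<Lambda> \<xi> E \<omega> =
     (let R = {(u, v). {u, v} \<in> E \<and> \<omega> {u, v}}
              \<union> {(Some x, Some y) | x y. \<exists>C\<in>\<xi>. x \<in> C \<and> y \<in> C}
      in card (verts \<Lambda> // ((R \<union> R\<inverse>)\<^sup>*)))"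

text \<open>Coupling of an edge: a_x a_y for a lattice edge xy, h_x a_x for a ghost edge x g.\<close>
definition coupling :: "('d site \<Rightarrow> real) \<Rightarrow> ('d site \<Rightarrow> real) \<Rightarrow> 'd edge \<Rightarrow> real" where
  "coupling h a e = (if None \<in> e then (\<Sum>x\<in>{x. Some x \<in> e}. h x * a x)
                     else (\<Prod>x\<in>{x. Some x \<in> e}. a x))"

definition edge_p :: "real \<Rightarrow> ('d site \<Rightarrow> real) \<Rightarrow> ('d site \<Rightarrow> real) \<Rightarrow> 'd edge \<Rightarrow> real" where
  "edge_p \<beta> h a e = 1 - exp (- 2 * \<beta> * coupling h a e)"

definition fk_weight ::
  "'d::finite site set \<Rightarrow> 'd site set set \<Rightarrow> real \<Rightarrow> ('d site \<Rightarrow> real) \<Rightarrow> ('d site \<Rightarrow> real)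
     \<Rightarrow> ('d edge \<Rightarrow> bool) \<Rightarrow> real" where
  "fk_weight \<Lambda> \<xi> \<beta> h a \<omega> =
     (\<Prod>e\<in>all_edges \<Lambda> h.
        (edge_p \<beta> h a e / (1 - edge_p \<beta> h a e)) ^ (if \<omega> e then 1 else 0))
     * 2 ^ num_clusters \<Lambda> \<xi> (all_edges \<Lambda> h) \<omega>"

definition phiFK ::
  "'d::finite site set \<Rightarrow> 'd site set set \<Rightarrow> real \<Rightarrow> ('d site \<Rightarrow> real) \<Rightarrow> ('d site \<Rightarrow> real)
     \<Rightarrow> ('d edge \<Rightarrow> bool) \<Rightarrow> real" where
  "phiFK \<Lambda> \<xi> \<beta> h a \<omega> = fk_weight \<Lambda> \<xi> \<beta> h a \<omega> /
     (\<Sum>\<omega>'\<in>configs (all_edges \<Lambda> h). fk_weight \<Lambda> \<xi> \<beta> h a \<omega>')"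

definition A_base ::
  "real \<Rightarrow> real \<Rightarrow> 'd::finite site set \<Rightarrow> ('d site \<Rightarrow> real) \<Rightarrow> ('d site \<Rightarrow> real) measure" where
  "A_base g a \<Lambda> b = PiM (Lbar \<Lambda>) (\<lambda>x. if x \<in> \<Lambda> then rho_tilde g a else return borel (b x))"

definition bc_ind :: "'d::finite site set \<Rightarrow> ('d site \<Rightarrow> real) \<Rightarrow> ('d site \<Rightarrow> real) \<Rightarrow> real" where
  "bc_ind \<Lambda> b t = (if \<forall>x\<in>ext_bd \<Lambda>. t x = b x then 1 else 0)"

definition psi_weight ::
  "'d::finite site set \<Rightarrow> 'd site set set \<Rightarrow> ('d site \<Rightarrow> real) \<Rightarrow> real \<Rightarrow> ('d site \<Rightarrow> real)
     \<Rightarrow> ('d edge \<Rightarrow> bool) \<times> ('d site \<Rightarrow> real) \<Rightarrow> real" where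
  "psi_weight \<Lambda> \<xi> b \<beta> h z = (case z of (\<omega>, t) \<Rightarrow>
     bc_ind \<Lambda> b t *
     (\<Prod>e\<in>all_edges \<Lambda> h. sqrt (1 - edge_p \<beta> h t e) *
        (edge_p \<beta> h t e / (1 - edge_p \<beta> h t e)) ^ (if \<omega> e then 1 else 0))
     * 2 ^ num_clusters \<Lambda> \<xi> (all_edges \<Lambda> h) \<omega>)"

definition joint_base ::
  "real \<Rightarrow> real \<Rightarrow> 'd::finite site set \<Rightarrow> ('d site \<Rightarrow> real) \<Rightarrow> ('d site \<Rightarrow> real)
     \<Rightarrow> (('d edge \<Rightarrow> bool) \<times> ('d site \<Rightarrow> real)) measure" where
  "joint_base g a \<Lambda> b h = count_space (configs (all_edges \<Lambda> h)) \<Otimes>\<^sub>M A_base g a \<Lambda> b"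

definition Z_Psi ::
  "real \<Rightarrow> real \<Rightarrow> 'd::finite site set \<Rightarrow> 'd site set set \<Rightarrow> ('d site \<Rightarrow> real) \<Rightarrow> real
     \<Rightarrow> ('d site \<Rightarrow> real) \<Rightarrow> real" where
  "Z_Psi g a \<Lambda> \<xi> b \<beta> h = (\<integral>z. psi_weight \<Lambda> \<xi> b \<beta> h z \<partial>joint_base g a \<Lambda> b h)"

definition Psi ::
  "real \<Rightarrow> real \<Rightarrow> 'd::finite site set \<Rightarrow> 'd site set set \<Rightarrow> ('d site \<Rightarrow> real) \<Rightarrow> real
     \<Rightarrow> ('d site \<Rightarrow> real) \<Rightarrow> (('d edge \<Rightarrow> bool) \<times> ('d site \<Rightarrow> real)) measure" where
  "Psi g a \<Lambda> \<xi> b \<beta> h = density (joint_base g a \<Lambda> b h)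
     (\<lambda>z. ennreal (psi_weight \<Lambda> \<xi> b \<beta> h z / Z_Psi g a \<Lambda> \<xi> b \<beta> h))"

definition mu ::
  "real \<Rightarrow> real \<Rightarrow> 'd::finite site set \<Rightarrow> 'd site set set \<Rightarrow> ('d site \<Rightarrow> real) \<Rightarrow> real
     \<Rightarrow> ('d site \<Rightarrow> real) \<Rightarrow> ('d site \<Rightarrow> real) measure" where
  "mu g a \<Lambda> \<xi> b \<beta> h = distr (Psi g a \<Lambda> \<xi> b \<beta> h) (A_base g a \<Lambda> b) snd"

definition Z_Ising ::
  "'d::finite site set \<Rightarrow> 'd site set set \<Rightarrow> real \<Rightarrow> ('d site \<Rightarrow> real) \<Rightarrow> ('d site \<Rightarrow> real) \<Rightarrow> real" where
  "Z_Ising \<Lambda> \<xi> \<beta> h t =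
     (\<Sum>\<sigma>\<in>{\<sigma> \<in> PiE (Lbar \<Lambda>) (\<lambda>_. {-1, 1}). \<forall>C\<in>\<xi>. \<forall>x\<in>C. \<forall>y\<in>C. \<sigma> x = \<sigma> y}.
        exp (\<beta> * (\<Sum>e\<in>bar_edges \<Lambda>. \<Prod>x\<in>{x. Some x \<in> e}. t x * \<sigma> x)
             + \<beta> * (\<Sum>x\<in>\<Lambda>. h x * t x * \<sigma> x)))"

definition nu_weight :: "'d::finite site set \<Rightarrow> real \<Rightarrow> ('d site \<Rightarrow> real) \<Rightarrow> ('d site \<Rightarrow> real) \<Rightarrow> real" where
  "nu_weight \<Lambda> \<beta> h \<phi> = exp (\<beta> * (\<Sum>e\<in>inner_edges \<Lambda>. \<Prod>x\<in>{x. Some x \<in> e}. \<phi> x)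
                               + \<beta> * (\<Sum>x\<in>\<Lambda>. h x * \<phi> x))"

definition nu ::
  "real \<Rightarrow> real \<Rightarrow> 'd::finite site set \<Rightarrow> real \<Rightarrow> ('d site \<Rightarrow> real) \<Rightarrow> ('d site \<Rightarrow> real) measure" where
  "nu g a \<Lambda> \<beta> h = density (PiM \<Lambda> (\<lambda>_. rho g a))
     (\<lambda>\<phi>. ennreal (nu_weight \<Lambda> \<beta> h \<phi> / (\<integral>\<psi>. nu_weight \<Lambda> \<beta> h \<psi> \<partial>PiM \<Lambda> (\<lambda>_. rho g a))))"

definition free_xi :: "'d::finite site set \<Rightarrow> 'd site set set" where
  "free_xi \<Lambda> = {{x} | x. x \<in> ext_bd \<Lambda>}"

definition free_b :: "'d site \<Rightarrow> real" where
  "free_b = (\<lambda>_. 0)"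

end

theory Submission
  imports Defs
begin

lemma card_compat:
  fixes A :: "'v set" and R :: "('v \<times> 'v) set"
  assumes A: "finite A" and R: "R \<subseteq> A \<times> A"
  shows "card {\<sigma> \<in> PiE A (\<lambda>_. {-1, 1::real}). \<forall>(u,v)\<in>R. \<sigma> u = \<sigma> v}
         = 2 ^ card (A // ((R \<union> R\<inverse>)\<^sup>*))"
proof -
  define r where "r = (R \<union> R\<inverse>)\<^sup>* \<inter> A \<times> A"
  have sub: "(x, y) \<in> (R \<union> R\<inverse>)\<^sup>* \<Longrightarrow> x \<in> A \<Longrightarrow> y \<in> A" for x y
    by (induction rule: rtrancl_induct) (use R in auto)
  have eqv: "equiv A r"
  proof -
    have "sym ((R \<union> R\<inverse>)\<^sup>*)"
      by (metis converse_Un converse_converse sup_commute sym_conv_converse_eq sym_rtrancl)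
    then show ?thesis
      unfolding r_def equiv_def refl_on_def sym_def trans_def
      by (auto dest: rtrancl_trans)
  qed
  have img: "(R \<union> R\<inverse>)\<^sup>* `` {x} = r `` {x}" if "x \<in> A" for x
    using sub that by (auto simp: r_def)
  have quot: "A // ((R \<union> R\<inverse>)\<^sup>*) = A // r"
    unfolding quotient_def using img by auto
  define S where "S = {\<sigma> \<in> PiE A (\<lambda>_. {-1, 1::real}). \<forall>(u,v)\<in>R. \<sigma> u = \<sigma> v}"
  define F where "F = (\<lambda>\<tau> :: 'v set \<Rightarrow> real. \<lambda>x\<in>A. \<tau> (r `` {x}))"
  have const: "\<sigma> x = \<sigma> y" if "\<sigma> \<in> S" "(x, y) \<in> (R \<union> R\<inverse>)\<^sup>*" for \<sigma> x y
    using that(2) by (induction rule: rtrancl_induct) (use that(1) in \<open>auto simp: S_def\<close>)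
  have "S = F ` PiE (A // r) (\<lambda>_. {-1, 1})"
  proof (intro equalityI subsetI)
    fix \<sigma> assume s: "\<sigma> \<in> S"
    define \<tau> where "\<tau> = (\<lambda>C\<in>A // r. \<sigma> (SOME x. x \<in> C))"
    have "\<tau> \<in> PiE (A // r) (\<lambda>_. {-1, 1})"
    proof -
      have "\<sigma> (SOME x. x \<in> C) \<in> {-1,1}" if Cq: "C \<in> A // r" for C
      proof -
        obtain x where x: "x \<in> A" "C = r `` {x}" using Cq unfolding quotient_def by blast
        have "(SOME x. x \<in> C) \<in> C" using x eqv by (metis equiv_class_self someI)
        then have "(SOME x. x \<in> C) \<in> A" using x by (auto simp: r_def)
        then show ?thesis using s by (auto simp: S_def PiE_iff)
      qed
      then show ?thesis by (auto simp: \<tau>_def)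
    qed
    moreover have "\<sigma> = F \<tau>"
    proof
      fix x show "\<sigma> x = F \<tau> x"
      proof (cases "x \<in> A")
        case True
        have C: "r `` {x} \<in> A // r" using True by (auto intro: quotientI)
        have "(SOME y. y \<in> r `` {x}) \<in> r `` {x}" using True eqv by (metis equiv_class_self someI)
        then have "(x, SOME y. y \<in> r `` {x}) \<in> (R \<union> R\<inverse>)\<^sup>*" by (auto simp: r_def)
        then show ?thesis using True C const[OF s] by (auto simp: F_def \<tau>_def)
      next
        case False then show ?thesis using s by (auto simp: F_def S_def PiE_iff extensional_def)
      qed
    qed
    ultimately show "\<sigma> \<in> F ` PiE (A // r) (\<lambda>_. {-1, 1})" by blast
  next
    fix \<sigma> assume "\<sigma> \<in> F ` PiE (A // r) (\<lambda>_. {-1, 1})"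
    then obtain \<tau> where t: "\<tau> \<in> PiE (A // r) (\<lambda>_. {-1, 1})" "\<sigma> = F \<tau>" by auto
    have "\<sigma> \<in> PiE A (\<lambda>_. {-1, 1})"
      using t by (auto simp: F_def PiE_iff intro: quotientI)
    moreover have "\<sigma> u = \<sigma> v" if "(u, v) \<in> R" for u v
    proof -
      have uv: "u \<in> A" "v \<in> A" using R that by auto
      have "(u, v) \<in> r" using that uv by (auto simp: r_def)
      then have "r `` {u} = r `` {v}" using eqv by (metis equiv_class_eq)
      then show ?thesis using t uv by (auto simp: F_def)
    qed
    ultimately show "\<sigma> \<in> S" by (auto simp: S_def)
  qed
  moreover have "inj_on F (PiE (A // r) (\<lambda>_. {-1, 1}))"
  proof (rule inj_onI)
    fix \<tau>1 \<tau>2 assume t: "\<tau>1 \<in> PiE (A // r) (\<lambda>_. {-1, 1})" "\<tau>2 \<in> PiE (A // r) (\<lambda>_. {-1, 1})"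
      "F \<tau>1 = F \<tau>2"
    show "\<tau>1 = \<tau>2"
    proof
      fix C show "\<tau>1 C = \<tau>2 C"
      proof (cases "C \<in> A // r")
        case True
        then obtain x where x: "x \<in> A" "C = r `` {x}" unfolding quotient_def by blast
        have "F \<tau>1 x = F \<tau>2 x" using t by simp
        then show ?thesis using x by (simp add: F_def)
      next
        case False then show ?thesis using t by (auto simp: PiE_iff extensional_def)
      qed
    qed
  qed
  moreover have "finite (A // r)" using A by (intro finite_quotient) (auto simp: r_def)
  ultimately have "card S = 2 ^ card (A // r)"
    by (simp add: card_image card_PiE numeral_2_eq_2)
  then show ?thesis using quot by (simp add: S_def)
qed

lemma pm1_cases: "(x::real) \<in> {-1, 1} \<Longrightarrow> x = -1 \<or> x = 1" by auto

lemma prod_pm1: "finite e \<Longrightarrow> (\<forall>v\<in>e. \<sigma> v \<in> {-1, 1::real}) \<Longrightarrow> (\<Prod>v\<in>e. \<sigma> v) \<in> {-1, 1}"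
  by (induction e rule: finite_induct) auto

lemma ES_local:
  fixes J c :: real
  assumes c: "c \<in> {-1, 1}" and P: "P = 1 - exp (- 2 * \<beta> * J)"
  shows "(\<Sum>b\<in>UNIV. sqrt (1 - P) * (P / (1 - P)) ^ (if b then 1 else 0)
            * (if b \<longrightarrow> c = 1 then 1 else 0)) = exp (\<beta> * J * c)"
proof -
  have q: "1 - P = exp (- 2 * \<beta> * J)" using P by simp
  have sq: "sqrt (exp (- 2 * \<beta> * J)) = exp (- \<beta> * J)"
  proof (rule real_sqrt_unique)
    show "(exp (- \<beta> * J))\<^sup>2 = exp (- 2 * \<beta> * J)"
      by (simp add: power2_eq_square flip: exp_add)
  qed simp
  show ?thesis
  proof (cases "c = 1")
    case True
    have "exp (- \<beta> * J) + exp (- \<beta> * J) * ((1 - exp (- 2 * \<beta> * J)) / exp (- 2 * \<beta> * J))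
        = exp (- \<beta> * J) / exp (- 2 * \<beta> * J)"
      by (simp add: field_simps)
    also have "\<dots> = exp (\<beta> * J)" by (simp flip: exp_diff)
    finally show ?thesis using True q sq P by (simp add: UNIV_bool)
  next
    case False
    then have "c = -1" using c by auto
    then show ?thesis using q sq by (simp add: UNIV_bool)
  qed
qed

lemma prod_ind_eq_if_all:
  "finite E \<Longrightarrow> (\<Prod>e\<in>E. (if P e then 1 else 0)) = (if \<forall>e\<in>E. P e then 1 else (0::real))"
  by (induction E rule: finite_induct) auto

lemma ES_abstract:
  fixes A :: "'v set" and E :: "'v set set" and Q :: "('v \<times> 'v) set"
    and J P :: "'v set \<Rightarrow> real" and \<beta> :: real
  assumes A: "finite A" and E: "finite E"
    and edges: "\<forall>e\<in>E. \<exists>u v. e = {u, v} \<and> u \<noteq> v \<and> u \<in> A \<and> v \<in> A"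
    and Q: "Q \<subseteq> A \<times> A"
    and P: "\<And>e. P e = 1 - exp (- 2 * \<beta> * J e)"
  shows "(\<Sum>\<omega>\<in>PiE E (\<lambda>_. UNIV).
            (\<Prod>e\<in>E. sqrt (1 - P e) * (P e / (1 - P e)) ^ (if \<omega> e then 1 else 0))
            * 2 ^ card (A // (({(u, v). {u, v} \<in> E \<and> \<omega> {u, v}} \<union> Q)
                             \<union> ({(u, v). {u, v} \<in> E \<and> \<omega> {u, v}} \<union> Q)\<inverse>)\<^sup>*))
       = (\<Sum>\<sigma>\<in>{\<sigma> \<in> PiE A (\<lambda>_. {-1, 1}). \<forall>(u, v)\<in>Q. \<sigma> u = \<sigma> v}.
            \<Prod>e\<in>E. exp (\<beta> * J e * (\<Prod>v\<in>e. \<sigma> v)))"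
proof -
  define S where "S = {\<sigma> \<in> PiE A (\<lambda>_. {-1, 1::real}). \<forall>(u, v)\<in>Q. \<sigma> u = \<sigma> v}"
  define R where "R = (\<lambda>\<omega>::'v set \<Rightarrow> bool. {(u, v). {u, v} \<in> E \<and> \<omega> {u, v}} \<union> Q)"
  define w where "w = (\<lambda>e b. sqrt (1 - P e) * (P e / (1 - P e)) ^ (if b then 1 else 0))"
  define agr where "agr = (\<lambda>(\<sigma>::'v \<Rightarrow> real) e. (\<Prod>v\<in>e. \<sigma> v) = (1::real))"
  have finS: "finite S" unfolding S_def using A by (intro finite_subset[OF _ finite_PiE[of A "\<lambda>_. {-1, 1::real}"]]) auto
  have RA: "R \<omega> \<subseteq> A \<times> A" for \<omega>
  proof
    fix z assume z: "z \<in> R \<omega>"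
    obtain u v where [simp]: "z = (u, v)" by (cases z)
    show "z \<in> A \<times> A"
    proof (cases "(u, v) \<in> Q")
      case True then show ?thesis using Q by auto
    next
      case False
      then have "{u, v} \<in> E" using z by (auto simp: R_def)
      then obtain u' v' where "{u, v} = {u', v'}" "u' \<in> A" "v' \<in> A" using edges by blast
      then show ?thesis by (auto simp: doubleton_eq_iff)
    qed
  qed
  have Seq: "{\<sigma> \<in> PiE A (\<lambda>_. {-1, 1::real}). \<forall>(u,v)\<in>R \<omega>. \<sigma> u = \<sigma> v}
       = {\<sigma> \<in> S. \<forall>e\<in>E. \<omega> e \<longrightarrow> agr \<sigma> e}" for \<omega>
  proof (intro equalityI subsetI)
    fix \<sigma> assume s: "\<sigma> \<in> {\<sigma> \<in> PiE A (\<lambda>_. {-1, 1::real}). \<forall>(u,v)\<in>R \<omega>. \<sigma> u = \<sigma> v}"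
    have "agr \<sigma> e" if "e \<in> E" "\<omega> e" for e
    proof -
      obtain u v where e: "e = {u, v}" "u \<noteq> v" "u \<in> A" "v \<in> A" using edges \<open>e \<in> E\<close> by blast
      then have "(u, v) \<in> R \<omega>" using that by (auto simp: R_def)
      then have "\<sigma> u = \<sigma> v" using s by auto
      moreover have "\<sigma> u \<in> {-1, 1}" using s e by (auto simp: PiE_iff)
      ultimately show ?thesis using e by (auto simp: agr_def)
    qed
    then show "\<sigma> \<in> {\<sigma> \<in> S. \<forall>e\<in>E. \<omega> e \<longrightarrow> agr \<sigma> e}" using s by (auto simp: S_def R_def)
  next
    fix \<sigma> assume s: "\<sigma> \<in> {\<sigma> \<in> S. \<forall>e\<in>E. \<omega> e \<longrightarrow> agr \<sigma> e}"
    have "\<sigma> u = \<sigma> v" if "(u, v) \<in> R \<omega>" for u v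
    proof (cases "(u, v) \<in> Q")
      case True then show ?thesis using s by (auto simp: S_def)
    next
      case False
      then have uv: "{u, v} \<in> E" "\<omega> {u, v}" using that by (auto simp: R_def)
      then obtain u' v' where "{u, v} = {u', v'}" "u' \<noteq> v'" "u' \<in> A" "v' \<in> A" using edges by blast
      then have ne: "u \<noteq> v" and inA: "u \<in> A" "v \<in> A" by (auto simp: doubleton_eq_iff)
      have "agr \<sigma> {u, v}" using s uv by auto
      then have "\<sigma> u * \<sigma> v = 1" using ne by (simp add: agr_def)
      moreover have "\<sigma> u \<in> {-1, 1}" "\<sigma> v \<in> {-1, 1}" using s inA by (auto simp: S_def PiE_iff)
      ultimately show ?thesis by auto
    qed
    then show "\<sigma> \<in> {\<sigma> \<in> PiE A (\<lambda>_. {-1, 1::real}). \<forall>(u,v)\<in>R \<omega>. \<sigma> u = \<sigma> v}"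
      using s by (auto simp: S_def)
  qed
  have cardeq: "(2::real) ^ card (A // ((R \<omega> \<union> (R \<omega>)\<inverse>)\<^sup>*))
      = (\<Sum>\<sigma>\<in>S. \<Prod>e\<in>E. (if \<omega> e \<longrightarrow> agr \<sigma> e then 1 else 0))" for \<omega>
  proof -
    have "(2::real) ^ card (A // ((R \<omega> \<union> (R \<omega>)\<inverse>)\<^sup>*))
        = real (card {\<sigma> \<in> S. \<forall>e\<in>E. \<omega> e \<longrightarrow> agr \<sigma> e})"
      using card_compat[OF A RA[of \<omega>]] Seq[of \<omega>] by simp
    also have "\<dots> = (\<Sum>\<sigma>\<in>S. if \<forall>e\<in>E. \<omega> e \<longrightarrow> agr \<sigma> e then 1 else 0)"
      using finS by (simp add: sum.If_cases Int_def conj_commute)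
    also have "\<dots> = (\<Sum>\<sigma>\<in>S. \<Prod>e\<in>E. (if \<omega> e \<longrightarrow> agr \<sigma> e then 1 else 0))"
      using E by (intro sum.cong refl) (simp add: prod_ind_eq_if_all)
    finally show ?thesis .
  qed
  have "(\<Sum>\<omega>\<in>PiE E (\<lambda>_. UNIV). (\<Prod>e\<in>E. w e (\<omega> e)) * 2 ^ card (A // ((R \<omega> \<union> (R \<omega>)\<inverse>)\<^sup>*)))
      = (\<Sum>\<omega>\<in>PiE E (\<lambda>_. UNIV). \<Sum>\<sigma>\<in>S. \<Prod>e\<in>E. w e (\<omega> e) * (if \<omega> e \<longrightarrow> agr \<sigma> e then 1 else 0))"
    by (simp add: cardeq sum_distrib_left prod.distrib)
  also have "\<dots> = (\<Sum>\<sigma>\<in>S. \<Sum>\<omega>\<in>PiE E (\<lambda>_. UNIV). \<Prod>e\<in>E. w e (\<omega> e) * (if \<omega> e \<longrightarrow> agr \<sigma> e then 1 else 0))"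
    by (rule sum.swap)
  also have "\<dots> = (\<Sum>\<sigma>\<in>S. \<Prod>e\<in>E. \<Sum>b\<in>UNIV. w e b * (if b \<longrightarrow> agr \<sigma> e then 1 else 0))"
    using E by (intro sum.cong refl) (simp add: prod_sum_PiE)
  also have "\<dots> = (\<Sum>\<sigma>\<in>S. \<Prod>e\<in>E. exp (\<beta> * J e * (\<Prod>v\<in>e. \<sigma> v)))"
  proof (intro sum.cong prod.cong refl)
    fix \<sigma> e assume s: "\<sigma> \<in> S" and e: "e \<in> E"
    obtain u v where uv: "e = {u, v}" "u \<in> A" "v \<in> A" using edges e by blast
    have c: "(\<Prod>v\<in>e. \<sigma> v) \<in> {-1, 1}"
      using s uv by (intro prod_pm1) (auto simp: S_def PiE_iff)
    show "(\<Sum>b\<in>UNIV. w e b * (if b \<longrightarrow> agr \<sigma> e then 1 else 0)) = exp (\<beta> * J e * (\<Prod>v\<in>e. \<sigma> v))"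
      using ES_local[OF c P] by (simp add: w_def agr_def)
  qed
  finally show ?thesis by (simp add: S_def R_def w_def)
qed

lemma adj_neq: "adj x y \<Longrightarrow> x \<noteq> y"
  by (auto simp: adj_def)

lemma adj_sym: "adj x y \<Longrightarrow> adj y x"
  by (simp add: adj_def abs_minus_commute)

lemma finite_nbrs: "finite {x. adj y (x :: 'd::finite site)}"
proof -
  have "{x. adj y x} \<subseteq> vec_nth -` (PiE UNIV (\<lambda>i. {y $ i - 1 .. y $ i + 1}))"
  proof
    fix x assume "x \<in> {x. adj y x}"
    then have s: "(\<Sum>i\<in>UNIV. \<bar>y $ i - x $ i\<bar>) = 1" by (simp add: adj_def)
    have "\<bar>y $ i - x $ i\<bar> \<le> 1" for i
    proof -
      have "\<bar>y $ i - x $ i\<bar> \<le> (\<Sum>i\<in>UNIV. \<bar>y $ i - x $ i\<bar>)"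
        by (rule member_le_sum) auto
      then show ?thesis using s by simp
    qed
    then have "y $ i - 1 \<le> x $ i \<and> x $ i \<le> y $ i + 1" for i
      by (smt (verit))
    then show "x \<in> vec_nth -` (PiE UNIV (\<lambda>i. {y $ i - 1 .. y $ i + 1}))"
      by (auto simp: PiE_iff)
  qed
  moreover have "finite (vec_nth -` (PiE UNIV (\<lambda>i. {y $ i - 1 .. y $ i + 1})))"
    by (intro finite_vimageI finite_PiE) (auto simp: inj_def vec_eq_iff)
  ultimately show ?thesis by (rule finite_subset)
qed

lemma finite_ext_bd: "finite \<Lambda> \<Longrightarrow> finite (ext_bd \<Lambda>)"
proof -
  assume f: "finite \<Lambda>"
  have "ext_bd \<Lambda> \<subseteq> (\<Union>y\<in>\<Lambda>. {x. adj y x})" by (auto simp: ext_bd_def)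
  moreover have "finite (\<Union>y\<in>\<Lambda>. {x. adj y x})" using f finite_nbrs by blast
  ultimately show ?thesis by (rule finite_subset)
qed

lemma finite_Lbar: "finite \<Lambda> \<Longrightarrow> finite (Lbar \<Lambda>)"
  by (simp add: Lbar_def finite_ext_bd)

lemma finite_verts: "finite \<Lambda> \<Longrightarrow> finite (verts \<Lambda>)"
  by (simp add: verts_def finite_Lbar)

lemma adj_Lbar: "x \<in> \<Lambda> \<Longrightarrow> adj x y \<Longrightarrow> y \<in> Lbar \<Lambda>"
  by (auto simp: Lbar_def ext_bd_def)

lemma finite_bar_edges: "finite \<Lambda> \<Longrightarrow> finite (bar_edges \<Lambda>)"
proof -
  assume f: "finite \<Lambda>"
  have "bar_edges \<Lambda> \<subseteq> (\<lambda>(x, y). {Some x, Some y}) ` (\<Lambda> \<times> Lbar \<Lambda>)"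
    by (auto simp: bar_edges_def intro: adj_Lbar)
  then show ?thesis using f finite_Lbar by (metis finite_SigmaI finite_imageI finite_subset)
qed

lemma finite_ghost_edges: "finite \<Lambda> \<Longrightarrow> finite (ghost_edges \<Lambda> h)"
proof -
  assume f: "finite \<Lambda>"
  have "ghost_edges \<Lambda> h \<subseteq> (\<lambda>x. {Some x, None}) ` \<Lambda>"
    by (auto simp: ghost_edges_def)
  then show ?thesis using f by (metis finite_imageI finite_subset)
qed

lemma finite_all_edges: "finite \<Lambda> \<Longrightarrow> finite (all_edges \<Lambda> h)"
  by (simp add: all_edges_def finite_bar_edges finite_ghost_edges)

lemma all_edges_shape:
  "\<forall>e\<in>all_edges \<Lambda> h. \<exists>u v. e = {u, v} \<and> u \<noteq> v \<and> u \<in> verts \<Lambda> \<and> v \<in> verts \<Lambda>"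
proof
  fix e assume "e \<in> all_edges \<Lambda> h"
  then consider (b) x y where "e = {Some x, Some y}" "x \<in> \<Lambda>" "adj x y"
    | (g) x where "e = {Some x, None}" "x \<in> \<Lambda>"
    unfolding all_edges_def bar_edges_def ghost_edges_def by blast
  then show "\<exists>u v. e = {u, v} \<and> u \<noteq> v \<and> u \<in> verts \<Lambda> \<and> v \<in> verts \<Lambda>"
  proof cases
    case b
    then show ?thesis using adj_neq[OF b(3)] adj_Lbar[OF b(2,3)]
      by (intro exI[of _ "Some x"] exI[of _ "Some y"]) (auto simp: verts_def Lbar_def)
  next
    case g
    then show ?thesis
      by (intro exI[of _ "Some x"] exI[of _ None]) (auto simp: verts_def Lbar_def)
  qed
qed

lemma bar_ghost_disjoint: "bar_edges \<Lambda> \<inter> ghost_edges \<Lambda> h = {}"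
  by (auto simp: bar_edges_def ghost_edges_def doubleton_eq_iff)

definition Qxi :: "'d site set set \<Rightarrow> ('d vtx \<times> 'd vtx) set" where
  "Qxi \<xi> = {(Some x, Some y) | x y. \<exists>C\<in>\<xi>. x \<in> C \<and> y \<in> C}"

lemma Qxi_sub:
  assumes "partition_on (ext_bd \<Lambda>) \<xi>"
  shows "Qxi \<xi> \<subseteq> verts \<Lambda> \<times> verts \<Lambda>"
proof -
  have "\<Union>\<xi> = ext_bd \<Lambda>" using assms by (simp add: partition_on_def)
  then show ?thesis by (auto simp: Qxi_def verts_def Lbar_def)
qed

lemma bar_term:
  assumes eb: "e \<in> bar_edges \<Lambda>" and tau: "\<forall>x\<in>Lbar \<Lambda>. \<tau> (Some x) = s * \<sigma> x" and ss: "s * s = (1::real)"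
  shows "coupling h t e * (\<Prod>v\<in>e. \<tau> v) = (\<Prod>x\<in>{x. Some x \<in> e}. t x * \<sigma> x)"
proof -
  obtain x y where e: "e = {Some x, Some y}" "x \<in> \<Lambda>" "adj x y"
    using eb by (auto simp: bar_edges_def)
  have xy: "x \<noteq> y" using e by (auto simp: adj_def)
  have yV: "y \<in> Lbar \<Lambda>" "x \<in> Lbar \<Lambda>" using e by (auto simp: Lbar_def ext_bd_def)
  have set: "{z. Some z \<in> e} = {x, y}" using e by auto
  have "(\<Prod>v\<in>e. \<tau> v) = \<tau> (Some x) * \<tau> (Some y)"
    using e xy by simp
  also have "\<dots> = (s * s) * (\<sigma> x * \<sigma> y)" using tau yV by simp
  also have "\<dots> = \<sigma> x * \<sigma> y" using ss by simp
  finally have p: "(\<Prod>v\<in>e. \<tau> v) = \<sigma> x * \<sigma> y" .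
  have n: "None \<notin> e" using e by auto
  have c: "coupling h t e = t x * t y" unfolding coupling_def set using n xy by simp
  show ?thesis unfolding c p set using xy by simp
qed

lemma gh_term:
  assumes eg: "e \<in> ghost_edges \<Lambda> h" and tau: "\<forall>x\<in>Lbar \<Lambda>. \<tau> (Some x) = s * \<sigma> x"
    and tN: "\<tau> None = s" and ss: "s * s = (1::real)"
  shows "coupling h t e * (\<Prod>v\<in>e. \<tau> v) = (\<Sum>x\<in>{x. Some x \<in> e}. h x * t x * \<sigma> x)"
proof -
  obtain x where e: "e = {Some x, None}" "x \<in> \<Lambda>"
    using eg by (auto simp: ghost_edges_def)
  have xV: "x \<in> Lbar \<Lambda>" using e by (auto simp: Lbar_def)
  have set: "{z. Some z \<in> e} = {x}" using e by auto
  have "(\<Prod>v\<in>e. \<tau> v) = \<tau> (Some x) * \<tau> None" using e by simp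
  also have "\<dots> = (s * s) * \<sigma> x" using tau tN xV by simp
  also have "\<dots> = \<sigma> x" using ss by simp
  finally have p: "(\<Prod>v\<in>e. \<tau> v) = \<sigma> x" .
  have n: "None \<in> e" using e by auto
  have c: "coupling h t e = h x * t x" unfolding coupling_def set using n by simp
  show ?thesis unfolding c p set by simp
qed


lemma ghsum:
  fixes f :: "'d::finite site \<Rightarrow> real"
  assumes fin: "finite \<Lambda>" and f0: "\<And>x. h x = 0 \<Longrightarrow> f x = 0"
  shows "(\<Sum>e\<in>ghost_edges \<Lambda> h. \<Sum>x\<in>{x. Some x \<in> e}. f x) = (\<Sum>x\<in>\<Lambda>. f x)"
proof -
  have im: "ghost_edges \<Lambda> h = (\<lambda>x. {Some x, None}) ` {x\<in>\<Lambda>. h x \<noteq> 0}"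
    by (auto simp: ghost_edges_def)
  have inj: "inj_on (\<lambda>x. {Some x, None}) {x\<in>\<Lambda>. h x \<noteq> 0}"
    by (auto simp: inj_on_def doubleton_eq_iff)
  have "(\<Sum>e\<in>ghost_edges \<Lambda> h. \<Sum>x\<in>{x. Some x \<in> e}. f x)
      = (\<Sum>y\<in>{x\<in>\<Lambda>. h x \<noteq> 0}. \<Sum>z\<in>{z. Some z \<in> {Some y, None}}. f z)"
    unfolding im by (rule sum.reindex[OF inj, unfolded comp_def])
  also have "\<dots> = (\<Sum>y\<in>{x\<in>\<Lambda>. h x \<noteq> 0}. f y)"
  proof (rule sum.cong[OF refl])
    fix y :: "'d site" have "{z. Some z \<in> {Some y, None}} = {y}" by auto
    then show "(\<Sum>z\<in>{z. Some z \<in> {Some y, None}}. f z) = f y" by simp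
  qed
  also have "\<dots> = (\<Sum>x\<in>\<Lambda>. f x)"
    using fin f0 by (intro sum.mono_neutral_left) auto
  finally show ?thesis .
qed


lemma Ising_sym:
  fixes t :: "'d::finite site \<Rightarrow> real"
  assumes fin: "finite \<Lambda>" and part: "partition_on (ext_bd \<Lambda>) \<xi>"
  shows "(\<Sum>\<sigma>\<in>{\<sigma> \<in> PiE (verts \<Lambda>) (\<lambda>_. {-1, 1}). \<forall>(u, v)\<in>Qxi \<xi>. \<sigma> u = \<sigma> v}.
            \<Prod>e\<in>all_edges \<Lambda> h. exp (\<beta> * coupling h t e * (\<Prod>v\<in>e. \<sigma> v)))
         = 2 * Z_Ising \<Lambda> \<xi> \<beta> h t"
proof -
  define V where "V = Lbar \<Lambda>"
  define S where "S = {\<sigma> \<in> PiE (verts \<Lambda>) (\<lambda>_. {-1, 1::real}). \<forall>(u, v)\<in>Qxi \<xi>. \<sigma> u = \<sigma> v}"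
  define SI where "SI = {\<sigma> \<in> PiE V (\<lambda>_. {-1, 1::real}). \<forall>C\<in>\<xi>. \<forall>x\<in>C. \<forall>y\<in>C. \<sigma> x = \<sigma> y}"
  define \<Phi> where "\<Phi> = (\<lambda>(s::real, \<sigma>::'d site \<Rightarrow> real). \<lambda>v\<in>verts \<Lambda>.
                        s * (case v of None \<Rightarrow> 1 | Some x \<Rightarrow> \<sigma> x))"
  define F where "F = (\<lambda>\<sigma>::'d site \<Rightarrow> real. exp (\<beta> * (\<Sum>e\<in>bar_edges \<Lambda>. \<Prod>x\<in>{x. Some x \<in> e}. t x * \<sigma> x)
             + \<beta> * (\<Sum>x\<in>\<Lambda>. h x * t x * \<sigma> x)))"
  have UC: "\<Union>\<xi> = ext_bd \<Lambda>" using part by (simp add: partition_on_def)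
  have vertsV: "verts \<Lambda> = Some ` V \<union> {None}" by (simp add: verts_def V_def)
  have finE: "finite (all_edges \<Lambda> h)" using fin by (rule finite_all_edges)
  have inj: "inj_on \<Phi> ({-1, 1} \<times> SI)"
  proof (rule inj_onI)
    fix p q assume p: "p \<in> {-1, 1} \<times> SI" and q: "q \<in> {-1, 1} \<times> SI" and eq: "\<Phi> p = \<Phi> q"
    obtain s \<sigma> where ps: "p = (s, \<sigma>)" by (cases p)
    obtain s' \<sigma>' where qs: "q = (s', \<sigma>')" by (cases q)
    have "\<Phi> p None = \<Phi> q None" using eq by simp
    then have ss: "s = s'" by (simp add: \<Phi>_def ps qs verts_def)
    have "\<sigma> x = \<sigma>' x" for x
    proof (cases "x \<in> V")
      case True
      have "\<Phi> p (Some x) = \<Phi> q (Some x)" using eq by simp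
      then have "s * \<sigma> x = s * \<sigma>' x" using True ss by (simp add: \<Phi>_def ps qs vertsV)
      moreover have "s \<noteq> 0" using p ps by auto
      ultimately show ?thesis by simp
    next
      case False
      then show ?thesis using p q ps qs by (auto simp: SI_def PiE_iff extensional_def)
    qed
    then show "p = q" using ps qs ss by auto
  qed
  have img: "\<Phi> ` ({-1, 1} \<times> SI) = S"
  proof (intro equalityI subsetI)
    fix \<tau> assume "\<tau> \<in> \<Phi> ` ({-1, 1} \<times> SI)"
    then obtain s \<sigma> where s: "s \<in> {-1, 1}" "\<sigma> \<in> SI" and \<tau>: "\<tau> = \<Phi> (s, \<sigma>)" by auto
    have vals: "\<sigma> x \<in> {-1, 1}" if "x \<in> V" for x using s that by (auto simp: SI_def PiE_iff)
    have "\<tau> \<in> PiE (verts \<Lambda>) (\<lambda>_. {-1, 1})"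
    proof (rule PiE_I)
      fix v assume v: "v \<in> verts \<Lambda>"
      then consider "v = None" | x where "v = Some x" "x \<in> V" by (auto simp: vertsV)
      then show "\<tau> v \<in> {-1, 1}"
      proof cases
        case 1 then show ?thesis using v s(1) by (simp add: \<tau> \<Phi>_def)
      next
        case 2
        have "\<tau> v = s * \<sigma> x" using v 2 by (simp add: \<tau> \<Phi>_def)
        then show ?thesis using s(1) vals[OF 2(2)] by auto
      qed
    next
      fix v assume "v \<notin> verts \<Lambda>" then show "\<tau> v = undefined" by (simp add: \<tau> \<Phi>_def)
    qed
    moreover have "\<tau> u = \<tau> v" if uvQ: "(u, v) \<in> Qxi \<xi>" for u v
    proof -
      obtain x y C where xy: "u = Some x" "v = Some y" "C \<in> \<xi>" "x \<in> C" "y \<in> C"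
        using uvQ unfolding Qxi_def by blast
      have "x \<in> ext_bd \<Lambda>" "y \<in> ext_bd \<Lambda>" using UC xy(3,4,5) by blast+
      then have xyV: "x \<in> V" "y \<in> V" unfolding V_def Lbar_def by blast+
      have "\<sigma> x = \<sigma> y" using s(2) xy(3,4,5) unfolding SI_def by blast
      then show ?thesis unfolding xy(1,2) \<tau> \<Phi>_def vertsV using xyV by simp
    qed
    ultimately show "\<tau> \<in> S" by (auto simp: S_def)
  next
    fix \<tau> assume t: "\<tau> \<in> S"
    define s where "s = \<tau> None"
    define \<sigma> where "\<sigma> = (\<lambda>x\<in>V. s * \<tau> (Some x))"
    have s: "s \<in> {-1, 1}" using t by (auto simp: S_def s_def PiE_iff verts_def)
    have tv: "\<tau> (Some x) \<in> {-1, 1}" if "x \<in> V" for x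
      using t that by (auto simp: S_def PiE_iff vertsV)
    have tQ: "\<forall>(u, v)\<in>Qxi \<xi>. \<tau> u = \<tau> v" using t unfolding S_def by blast
    have pi: "\<sigma> \<in> PiE V (\<lambda>_. {-1, 1})"
    proof (rule PiE_I)
      fix x assume "x \<in> V"
      then show "\<sigma> x \<in> {-1, 1}" using s tv[of x] by (auto simp: \<sigma>_def)
    qed (simp add: \<sigma>_def)
    have eq: "\<forall>C\<in>\<xi>. \<forall>x\<in>C. \<forall>y\<in>C. \<sigma> x = \<sigma> y"
    proof (intro ballI)
      fix C x y assume C: "C \<in> \<xi>" "x \<in> C" "y \<in> C"
      have q: "(Some x, Some y) \<in> Qxi \<xi>" unfolding Qxi_def using C by blast
      have e: "\<tau> (Some x) = \<tau> (Some y)" using bspec[OF tQ q] by simp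
      have "x \<in> ext_bd \<Lambda>" "y \<in> ext_bd \<Lambda>" using UC C by blast+
      then have "x \<in> V" "y \<in> V" unfolding V_def Lbar_def by blast+
      then show "\<sigma> x = \<sigma> y" using e by (simp add: \<sigma>_def)
    qed
    have "\<sigma> \<in> SI" unfolding SI_def using pi eq by blast
    moreover have "\<tau> = \<Phi> (s, \<sigma>)"
    proof
      fix v show "\<tau> v = \<Phi> (s, \<sigma>) v"
      proof (cases "v \<in> verts \<Lambda>")
        case True
        then consider "v = None" | x where "v = Some x" "x \<in> V" by (auto simp: vertsV)
        then show ?thesis
        proof cases
          case 1 then show ?thesis using True by (simp add: \<Phi>_def s_def)
        next
          case 2
          have "s * s = 1" using s by auto
          then show ?thesis using True 2 by (simp add: \<Phi>_def \<sigma>_def mult.assoc[symmetric])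
        qed
      next
        case False then show ?thesis using t by (auto simp: \<Phi>_def S_def PiE_iff extensional_def)
      qed
    qed
    ultimately show "\<tau> \<in> \<Phi> ` ({-1, 1} \<times> SI)" using s by blast
  qed
  have summand: "(\<Prod>e\<in>all_edges \<Lambda> h. exp (\<beta> * coupling h t e * (\<Prod>v\<in>e. \<Phi> (s, \<sigma>) v))) = F \<sigma>"
    if s: "s \<in> {-1, 1}" and \<sigma>: "\<sigma> \<in> SI" for s \<sigma>
  proof -
    have ss: "s * s = 1" using s by auto
    have tau: "\<forall>x\<in>Lbar \<Lambda>. \<Phi> (s, \<sigma>) (Some x) = s * \<sigma> x"
      by (simp add: \<Phi>_def vertsV V_def)
    have tN: "\<Phi> (s, \<sigma>) None = s" by (simp add: \<Phi>_def vertsV)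
    note bar = bar_term[OF _ tau ss]
    note gh = gh_term[OF _ tau tN ss]
    have ghsum: "(\<Sum>e\<in>ghost_edges \<Lambda> h. \<Sum>x\<in>{x. Some x \<in> e}. h x * t x * \<sigma> x)
        = (\<Sum>x\<in>\<Lambda>. h x * t x * \<sigma> x)"
      using fin by (rule ghsum) simp
    have e1: "(\<Prod>e\<in>all_edges \<Lambda> h. exp (\<beta> * coupling h t e * (\<Prod>v\<in>e. \<Phi> (s, \<sigma>) v)))
        = exp (\<Sum>e\<in>all_edges \<Lambda> h. \<beta> * (coupling h t e * (\<Prod>v\<in>e. \<Phi> (s, \<sigma>) v)))"
      unfolding exp_sum[OF finE] by (simp only: mult.assoc)
    have e2: "(\<Sum>e\<in>all_edges \<Lambda> h. \<beta> * (coupling h t e * (\<Prod>v\<in>e. \<Phi> (s, \<sigma>) v)))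
        = (\<Sum>e\<in>bar_edges \<Lambda>. \<beta> * (coupling h t e * (\<Prod>v\<in>e. \<Phi> (s, \<sigma>) v)))
          + (\<Sum>e\<in>ghost_edges \<Lambda> h. \<beta> * (coupling h t e * (\<Prod>v\<in>e. \<Phi> (s, \<sigma>) v)))"
      unfolding all_edges_def
      by (rule sum.union_disjoint[OF finite_bar_edges[OF fin] finite_ghost_edges[OF fin] bar_ghost_disjoint])
    have e3: "(\<Sum>e\<in>bar_edges \<Lambda>. \<beta> * (coupling h t e * (\<Prod>v\<in>e. \<Phi> (s, \<sigma>) v)))
        = \<beta> * (\<Sum>e\<in>bar_edges \<Lambda>. \<Prod>x\<in>{x. Some x \<in> e}. t x * \<sigma> x)"
      unfolding sum_distrib_left by (rule sum.cong[OF refl]) (simp only: bar)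
    have e4: "(\<Sum>e\<in>ghost_edges \<Lambda> h. \<beta> * (coupling h t e * (\<Prod>v\<in>e. \<Phi> (s, \<sigma>) v)))
        = \<beta> * (\<Sum>x\<in>\<Lambda>. h x * t x * \<sigma> x)"
      unfolding ghsum[symmetric] sum_distrib_left by (rule sum.cong[OF refl]) (simp add: gh sum_distrib_left)
    show ?thesis unfolding F_def e1 e2 e3 e4 ..

  qed
  define G where "G = (\<lambda>\<sigma>::'d vtx \<Rightarrow> real. \<Prod>e\<in>all_edges \<Lambda> h. exp (\<beta> * coupling h t e * (\<Prod>v\<in>e. \<sigma> v)))"
  have r1: "(\<Sum>\<sigma>\<in>S. G \<sigma>) = (\<Sum>p\<in>{-1, 1} \<times> SI. G (\<Phi> p))"
    unfolding img[symmetric] by (rule sum.reindex[OF inj, unfolded comp_def])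
  have r2: "(\<Sum>p\<in>{-1, 1} \<times> SI. G (\<Phi> p)) = (\<Sum>s\<in>{-1, 1::real}. \<Sum>\<sigma>\<in>SI. G (\<Phi> (s, \<sigma>)))"
    by (rule sum.cartesian_product')
  have r3: "(\<Sum>s\<in>{-1, 1::real}. \<Sum>\<sigma>\<in>SI. G (\<Phi> (s, \<sigma>))) = (\<Sum>s\<in>{-1, 1::real}. \<Sum>\<sigma>\<in>SI. F \<sigma>)"
  proof (rule sum.cong[OF refl])
    fix s :: real assume s: "s \<in> {-1, 1}"
    show "(\<Sum>\<sigma>\<in>SI. G (\<Phi> (s, \<sigma>))) = (\<Sum>\<sigma>\<in>SI. F \<sigma>)"
    proof (rule sum.cong[OF refl])
      fix \<sigma> assume "\<sigma> \<in> SI"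
      then show "G (\<Phi> (s, \<sigma>)) = F \<sigma>" unfolding G_def by (rule summand[OF s])
    qed
  qed
  have r4: "(\<Sum>s\<in>{-1, 1::real}. \<Sum>\<sigma>\<in>SI. F \<sigma>) = 2 * (\<Sum>\<sigma>\<in>SI. F \<sigma>)" by simp
  have r5: "Z_Ising \<Lambda> \<xi> \<beta> h t = (\<Sum>\<sigma>\<in>SI. F \<sigma>)"
    unfolding Z_Ising_def SI_def F_def V_def by (rule refl)
  have "(\<Sum>\<sigma>\<in>S. G \<sigma>) = 2 * Z_Ising \<Lambda> \<xi> \<beta> h t"
    unfolding r1 r2 r3 r4 r5 by (rule refl)
  then show ?thesis unfolding S_def G_def .
qed

lemma num_clusters_eq:
  "num_clusters \<Lambda> \<xi> E \<omega> = card (verts \<Lambda> // ((({(u, v). {u, v} \<in> E \<and> \<omega> {u, v}} \<union> Qxi \<xi>)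
      \<union> ({(u, v). {u, v} \<in> E \<and> \<omega> {u, v}} \<union> Qxi \<xi>)\<inverse>)\<^sup>*))"
  by (simp add: num_clusters_def Qxi_def Let_def)

lemma ES_fk:
  assumes fin: "finite \<Lambda>" and part: "partition_on (ext_bd \<Lambda>) \<xi>"
  shows "(\<Sum>\<omega>\<in>configs (all_edges \<Lambda> h).
            (\<Prod>e\<in>all_edges \<Lambda> h. sqrt (1 - edge_p \<beta> h t e)
               * (edge_p \<beta> h t e / (1 - edge_p \<beta> h t e)) ^ (if \<omega> e then 1 else 0))
            * 2 ^ num_clusters \<Lambda> \<xi> (all_edges \<Lambda> h) \<omega>)
         = 2 * Z_Ising \<Lambda> \<xi> \<beta> h t"
  unfolding configs_def num_clusters_eq
  by (subst ES_abstract[OF finite_verts[OF fin] finite_all_edges[OF fin] all_edges_shape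
        Qxi_sub[OF part], where J = "coupling h t" and \<beta> = \<beta>])
     (simp_all add: edge_p_def Ising_sym[OF fin part])

lemma psi_fk:
  assumes fin: "finite \<Lambda>"
  shows "psi_weight \<Lambda> \<xi> b \<beta> h (\<omega>, t) = bc_ind \<Lambda> b t
           * (\<Prod>e\<in>all_edges \<Lambda> h. sqrt (1 - edge_p \<beta> h t e)) * fk_weight \<Lambda> \<xi> \<beta> h t \<omega>"
  by (simp add: psi_weight_def fk_weight_def prod.distrib mult.assoc)

lemma Z_Ising_pos:
  assumes fin: "finite \<Lambda>" and part: "partition_on (ext_bd \<Lambda>) \<xi>"
  shows "Z_Ising \<Lambda> \<xi> \<beta> h t > 0"
proof -
  let ?S = "{\<sigma> \<in> PiE (Lbar \<Lambda>) (\<lambda>_. {-1, 1::real}). \<forall>C\<in>\<xi>. \<forall>x\<in>C. \<forall>y\<in>C. \<sigma> x = \<sigma> y}"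
  have UC: "\<Union>\<xi> = ext_bd \<Lambda>" using part by (simp add: partition_on_def)
  have "\<forall>C\<in>\<xi>. C \<subseteq> Lbar \<Lambda>" using UC unfolding Lbar_def by blast
  then have "(\<lambda>x\<in>Lbar \<Lambda>. 1) \<in> ?S" by (auto simp: subset_iff)
  moreover have "finite ?S"
    by (rule finite_subset[OF _ finite_PiE[OF finite_Lbar[OF fin], of "\<lambda>_. {-1, 1::real}"]]) auto
  ultimately have "?S \<noteq> {}" "finite ?S" by blast+
  then show ?thesis unfolding Z_Ising_def
    by (intro sum_pos) auto
qed

lemma sqrt_prod_pos:
  assumes fin: "finite \<Lambda>"
  shows "(\<Prod>e\<in>all_edges \<Lambda> h. sqrt (1 - edge_p \<beta> h t e)) > 0"
  by (intro prod_pos) (simp add: edge_p_def)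

lemma sum_fk:
  assumes fin: "finite \<Lambda>" and part: "partition_on (ext_bd \<Lambda>) \<xi>"
  shows "(\<Prod>e\<in>all_edges \<Lambda> h. sqrt (1 - edge_p \<beta> h t e))
          * (\<Sum>\<omega>\<in>configs (all_edges \<Lambda> h). fk_weight \<Lambda> \<xi> \<beta> h t \<omega>) = 2 * Z_Ising \<Lambda> \<xi> \<beta> h t"
  unfolding ES_fk[OF fin part, symmetric] sum_distrib_left
  by (rule sum.cong[OF refl]) (simp add: fk_weight_def prod.distrib mult.assoc)

lemma ES_concrete:
  assumes fin: "finite \<Lambda>" and part: "partition_on (ext_bd \<Lambda>) \<xi>"
  shows "(\<Sum>\<omega>\<in>configs (all_edges \<Lambda> h). psi_weight \<Lambda> \<xi> b \<beta> h (\<omega>, t))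
          = bc_ind \<Lambda> b t * (2 * Z_Ising \<Lambda> \<xi> \<beta> h t)"
  unfolding psi_fk[OF fin] sum_fk[OF fin part, symmetric]
  by (simp add: sum_distrib_left mult.assoc)

lemma psi_phi:
  assumes fin: "finite \<Lambda>" and part: "partition_on (ext_bd \<Lambda>) \<xi>"
  shows "psi_weight \<Lambda> \<xi> b \<beta> h (\<omega>, t)
           = bc_ind \<Lambda> b t * (2 * Z_Ising \<Lambda> \<xi> \<beta> h t) * phiFK \<Lambda> \<xi> \<beta> h t \<omega>"
proof -
  let ?P = "(\<Prod>e\<in>all_edges \<Lambda> h. sqrt (1 - edge_p \<beta> h t e))"
  let ?F = "(\<Sum>\<omega>\<in>configs (all_edges \<Lambda> h). fk_weight \<Lambda> \<xi> \<beta> h t \<omega>)"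
  have "?P * ?F > 0" unfolding sum_fk[OF fin part] using Z_Ising_pos[OF fin part] by simp
  then have F: "?F \<noteq> 0" by auto
  show ?thesis
    unfolding psi_fk[OF fin] sum_fk[OF fin part, symmetric] phiFK_def
    using F by (simp add: field_simps)
qed

lemma quartic_bound:
  fixes g D u :: real
  assumes g: "g > 0"
  shows "D * u - g * u\<^sup>2 \<le> D\<^sup>2 / (4 * g)"
proof -
  have "0 \<le> (2 * g * u - D)\<^sup>2" by simp
  then have "4 * g * (D * u - g * u\<^sup>2) \<le> D\<^sup>2"
    by (simp add: power2_eq_square algebra_simps)
  then show ?thesis using g by (simp add: pos_le_divide_eq mult.commute)
qed

lemma integrable_quartic:
  fixes g D :: real
  assumes g: "g > 0"
  shows "integrable lborel (\<lambda>t. exp (- g * t ^ 4 + D * t ^ 2))"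
proof -
  define K where "K = (D + 1/2)\<^sup>2 / (4 * g)"
  have i: "integrable lborel (\<lambda>t. (exp K * sqrt (2 * pi)) * std_normal_density t)"
    by (rule integrable_mult_right) simp
  have m: "(\<lambda>t. exp (- g * t ^ 4 + D * t ^ 2)) \<in> borel_measurable lborel" by measurable
  have "AE t in lborel. norm (exp (- g * t ^ 4 + D * t ^ 2))
          \<le> norm ((exp K * sqrt (2 * pi)) * std_normal_density t)"
  proof (rule AE_I2)
    fix t :: real
    have b: "(D + 1/2) * t\<^sup>2 - g * (t\<^sup>2)\<^sup>2 \<le> K"
      unfolding K_def by (rule quartic_bound[OF g])
    have "- g * t ^ 4 + D * t ^ 2 \<le> K + (- t\<^sup>2 / 2)"
      using b by (simp add: power2_eq_square power4_eq_xxxx algebra_simps)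
    then have "exp (- g * t ^ 4 + D * t ^ 2) \<le> exp K * exp (- t\<^sup>2 / 2)"
      by (simp flip: exp_add)
    moreover have "(exp K * sqrt (2 * pi)) * std_normal_density t = exp K * exp (- t\<^sup>2 / 2)"
      by (simp add: std_normal_density_def)
    ultimately show "norm (exp (- g * t ^ 4 + D * t ^ 2))
          \<le> norm ((exp K * sqrt (2 * pi)) * std_normal_density t)"
      by (simp add: mult.assoc)
  qed
  then show ?thesis by (rule Bochner_Integration.integrable_bound[OF i m])
qed

definition Nrho :: "real \<Rightarrow> real \<Rightarrow> real" where
  "Nrho g a = (\<integral>s. phi4_density g a s \<partial>lborel)"

lemma phi4_density_alt: "phi4_density g a t = exp (- g * t ^ 4 + (- a) * t ^ 2)"
  by (simp add: phi4_density_def)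

lemma integrable_phi4: "g > 0 \<Longrightarrow> integrable lborel (phi4_density g a)"
  unfolding phi4_density_alt[abs_def] by (rule integrable_quartic)

lemma phi4_measurable[measurable]: "phi4_density g a \<in> borel_measurable borel"
  unfolding phi4_density_def[abs_def] by measurable

lemma nn_phi4: "g > 0 \<Longrightarrow> (\<integral>\<^sup>+ t. ennreal (phi4_density g a t) \<partial>lborel) = ennreal (Nrho g a)"
  unfolding Nrho_def
  by (rule nn_integral_eq_integral[OF integrable_phi4]) (auto simp: phi4_density_def)

lemma Nrho_pos: assumes g: "g > 0" shows "Nrho g a > 0"
proof -
  have "Nrho g a \<ge> 0" unfolding Nrho_def
    by (rule integral_nonneg_AE) (auto simp: phi4_density_def)
  moreover have "(\<integral>\<^sup>+ t. ennreal (phi4_density g a t) \<partial>lborel) \<noteq> 0"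
  proof
    assume "(\<integral>\<^sup>+ t. ennreal (phi4_density g a t) \<partial>lborel) = 0"
    then have "AE t in lborel. ennreal (phi4_density g a t) = 0"
      by (subst (asm) nn_integral_0_iff_AE) auto
    moreover have "\<And>t. ennreal (phi4_density g a t) \<noteq> 0" by (simp add: phi4_density_def)
    ultimately have F: "AE t::real in lborel. False" by simp
    have "space lborel \<in> null_sets (lborel :: real measure)"
      using AE_iff_null_sets[of "space lborel" "lborel :: real measure"] F by simp
    then show False by (auto dest: null_setsD1)
  qed
  ultimately show ?thesis using nn_phi4[OF g, of a] by (auto simp: less_le)
qed

lemma rho_alt: "rho g a = density lborel (\<lambda>t. ennreal (phi4_density g a t / Nrho g a))"
  by (simp add: rho_def Nrho_def)

lemma prob_rho: assumes g: "g > 0" shows "prob_space (rho g a)"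
proof (rule prob_spaceI)
  have "emeasure (rho g a) (space (rho g a)) = (\<integral>\<^sup>+ t. ennreal (phi4_density g a t / Nrho g a) \<partial>lborel)"
    unfolding rho_alt by (simp add: emeasure_density)
  also have "\<dots> = (\<integral>\<^sup>+ t. ennreal (phi4_density g a t) * ennreal (1 / Nrho g a) \<partial>lborel)"
    using Nrho_pos[OF g, of a]
    by (intro nn_integral_cong) (simp add: ennreal_mult[symmetric] phi4_density_def)
  also have "\<dots> = ennreal (Nrho g a) * ennreal (1 / Nrho g a)"
    by (simp add: nn_integral_multc nn_phi4[OF g])
  also have "\<dots> = 1" using Nrho_pos[OF g, of a]
    by (simp add: ennreal_mult[symmetric])
  finally show "emeasure (rho g a) (space (rho g a)) = 1" .
qed

lemma sets_rho[simp, measurable_cong]: "sets (rho g a) = sets borel"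
  by (simp add: rho_def)

lemma space_rho[simp]: "space (rho g a) = UNIV"
  by (simp add: rho_def)

lemma sets_rho_tilde[simp, measurable_cong]: "sets (rho_tilde g a) = sets borel"
  by (simp add: rho_tilde_def)

lemma space_rho_tilde[simp]: "space (rho_tilde g a) = UNIV"
  by (simp add: rho_tilde_def)

lemma prob_rho_tilde: "g > 0 \<Longrightarrow> prob_space (rho_tilde g a)"
  unfolding rho_tilde_def
  by (rule prob_space.prob_space_distr[OF prob_rho]) auto

lemma AE_rho_tilde_nonneg: "AE y in rho_tilde g a. 0 \<le> y"
  unfolding rho_tilde_def by (subst AE_distr_iff) auto

definition MA :: "real \<Rightarrow> real \<Rightarrow> 'd::finite site set \<Rightarrow> ('d site \<Rightarrow> real) \<Rightarrow> 'd site \<Rightarrow> real measure" where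
  "MA g a \<Lambda> b = (\<lambda>x. if x \<in> \<Lambda> then rho_tilde g a else return borel (b x))"

lemma A_base_MA: "A_base g a \<Lambda> b = PiM (Lbar \<Lambda>) (MA g a \<Lambda> b)"
  by (simp add: A_base_def MA_def)

lemma sets_MA[simp]: "sets (MA g a \<Lambda> b x) = sets borel"
  by (simp add: MA_def)

lemma space_MA[simp]: "space (MA g a \<Lambda> b x) = UNIV"
  by (simp add: MA_def)

lemma prob_MA: "g > 0 \<Longrightarrow> prob_space (MA g a \<Lambda> b x)"
  by (simp add: MA_def prob_rho_tilde prob_space_return)

lemma prob_A_base: "g > 0 \<Longrightarrow> prob_space (A_base g a \<Lambda> b)"
  unfolding A_base_MA by (intro prob_space_PiM prob_MA)

lemma space_A_base: "space (A_base g a \<Lambda> b) = PiE (Lbar \<Lambda>) (\<lambda>_. UNIV)"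
  by (simp add: A_base_MA space_PiM)

lemma comp_meas[measurable]: "(\<lambda>t. t x) \<in> borel_measurable (A_base g a \<Lambda> b)"
proof (cases "x \<in> Lbar \<Lambda>")
  case True
  have "(\<lambda>t. t x) \<in> measurable (A_base g a \<Lambda> b) (MA g a \<Lambda> b x)"
    unfolding A_base_MA by (rule measurable_component_singleton[OF True])
  moreover have "measurable (A_base g a \<Lambda> b) (MA g a \<Lambda> b x) = borel_measurable (A_base g a \<Lambda> b)"
    by (rule measurable_cong_sets) simp_all
  ultimately show ?thesis by simp
next
  case False
  have "(\<lambda>t. undefined :: real) \<in> borel_measurable (A_base g a \<Lambda> b)" by simp
  then show ?thesis
    by (rule measurable_cong[THEN iffD1, rotated]) (use False in \<open>auto simp: space_A_base PiE_def extensional_def\<close>)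
qed

lemma AE_A_base_nonneg:
  assumes g: "g > 0" and fin: "finite \<Lambda>" and b: "\<forall>x\<in>ext_bd \<Lambda>. b x \<ge> 0"
  shows "AE t in A_base g a \<Lambda> b. \<forall>x\<in>Lbar \<Lambda>. 0 \<le> t x"
proof (rule AE_finite_allI[OF finite_Lbar[OF fin]])
  fix x assume x: "x \<in> Lbar \<Lambda>"
  have "AE y in MA g a \<Lambda> b x. 0 \<le> y"
  proof (cases "x \<in> \<Lambda>")
    case True then show ?thesis unfolding MA_def by (simp add: AE_rho_tilde_nonneg)
  next
    case False
    then have "x \<in> ext_bd \<Lambda>" using x by (simp add: Lbar_def)
    then have "0 \<le> b x" using b by auto
    then show ?thesis using False unfolding MA_def by (simp add: AE_return)
  qed
  then show "AE t in A_base g a \<Lambda> b. 0 \<le> t x"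
    unfolding A_base_MA by (rule AE_PiM_component[OF prob_MA[OF g] x])
qed

lemma AE_A_base_bc:
  assumes g: "g > 0" and fin: "finite \<Lambda>"
  shows "AE t in A_base g a \<Lambda> b. bc_ind \<Lambda> b t = 1"
proof -
  have "AE t in A_base g a \<Lambda> b. \<forall>x\<in>ext_bd \<Lambda>. t x = b x"
  proof (rule AE_finite_allI[OF finite_ext_bd[OF fin]])
    fix x assume x: "x \<in> ext_bd \<Lambda>"
    then have xL: "x \<in> Lbar \<Lambda>" "x \<notin> \<Lambda>" by (auto simp: Lbar_def ext_bd_def)
    have "AE y in MA g a \<Lambda> b x. y = b x"
      using xL unfolding MA_def by (simp add: AE_return)
    then show "AE t in A_base g a \<Lambda> b. t x = b x"
      unfolding A_base_MA by (rule AE_PiM_component[OF prob_MA[OF g] xL(1)])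
  qed
  then show ?thesis by eventually_elim (simp add: bc_ind_def)
qed

lemma coupling_meas[measurable]: "(\<lambda>t. coupling h t e) \<in> borel_measurable (A_base g a \<Lambda> b)"
  unfolding coupling_def by measurable

lemma edge_p_meas[measurable]: "(\<lambda>t. edge_p \<beta> h t e) \<in> borel_measurable (A_base g a \<Lambda> b)"
  unfolding edge_p_def by measurable

lemma bc_ind_prod:
  "finite \<Lambda> \<Longrightarrow> bc_ind \<Lambda> b t = (\<Prod>x\<in>ext_bd \<Lambda>. (if t x = b x then 1 else 0))"
  unfolding bc_ind_def by (simp only: prod_ind_eq_if_all[OF finite_ext_bd])

lemma bc_meas[measurable]:
  assumes "finite \<Lambda>"
  shows "(\<lambda>t. bc_ind \<Lambda> b t) \<in> borel_measurable (A_base g a \<Lambda>' b')"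
  unfolding bc_ind_prod[OF assms] by measurable

lemma psi_sec_meas[measurable]:
  assumes "finite \<Lambda>"
  shows "(\<lambda>t. psi_weight \<Lambda> \<xi> b \<beta> h (\<omega>, t)) \<in> borel_measurable (A_base g a \<Lambda> b)"
  unfolding psi_weight_def using assms by simp measurable

lemma Z_Ising_meas[measurable]:
  "(\<lambda>t. Z_Ising \<Lambda> \<xi> \<beta> h t) \<in> borel_measurable (A_base g a \<Lambda>' b')"
  unfolding Z_Ising_def by measurable

lemma phiFK_meas[measurable]:
  "(\<lambda>t. phiFK \<Lambda> \<xi> \<beta> h t \<omega>) \<in> borel_measurable (A_base g a \<Lambda>' b')"
  unfolding phiFK_def fk_weight_def by measurable

lemma coupling_nonneg:
  assumes e: "e \<in> all_edges \<Lambda> h" and t: "\<forall>x\<in>Lbar \<Lambda>. 0 \<le> t x" and hp: "\<forall>x\<in>\<Lambda>. 0 \<le> h x"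
  shows "0 \<le> coupling h t e"
proof -
  from e consider (b) x y where "e = {Some x, Some y}" "x \<in> \<Lambda>" "adj x y"
    | (g) x where "e = {Some x, None}" "x \<in> \<Lambda>"
    unfolding all_edges_def bar_edges_def ghost_edges_def by blast
  then show ?thesis
  proof cases
    case b
    have n: "None \<notin> e" using b by auto
    have "{z. Some z \<in> e} \<subseteq> Lbar \<Lambda>" using b adj_Lbar[OF b(2,3)] by (auto simp: Lbar_def)
    then show ?thesis unfolding coupling_def using n t by (auto intro!: prod_nonneg)
  next
    case g
    have n: "None \<in> e" using g by auto
    have s: "{z. Some z \<in> e} = {x}" using g by auto
    have "x \<in> Lbar \<Lambda>" using g by (auto simp: Lbar_def)
    then show ?thesis unfolding coupling_def s using n t hp g by simp
  qed
qed

lemma psi_nonneg: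
  assumes t: "\<forall>x\<in>Lbar \<Lambda>. 0 \<le> t x" and hp: "\<forall>x\<in>\<Lambda>. 0 \<le> h x" and beta: "0 \<le> \<beta>"
  shows "0 \<le> psi_weight \<Lambda> \<xi> b \<beta> h (\<omega>, t)"
proof -
  have f: "0 \<le> sqrt (1 - edge_p \<beta> h t e) * (edge_p \<beta> h t e / (1 - edge_p \<beta> h t e)) ^ (if \<omega> e then 1 else 0)"
    if e: "e \<in> all_edges \<Lambda> h" for e
  proof -
    have c: "0 \<le> \<beta> * coupling h t e" using coupling_nonneg[OF e t hp] beta by simp
    have "exp (- 2 * \<beta> * coupling h t e) \<le> 1" using c by simp
    then have "0 \<le> edge_p \<beta> h t e" by (simp add: edge_p_def)
    moreover have "0 < 1 - edge_p \<beta> h t e" by (simp add: edge_p_def)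
    ultimately show ?thesis by simp
  qed
  have bc: "0 \<le> bc_ind \<Lambda> b t" by (simp add: bc_ind_def)
  have P: "0 \<le> (\<Prod>e\<in>all_edges \<Lambda> h. sqrt (1 - edge_p \<beta> h t e) *
        (edge_p \<beta> h t e / (1 - edge_p \<beta> h t e)) ^ (if \<omega> e then 1 else 0))"
    by (rule prod_nonneg) (use f in blast)
  have "psi_weight \<Lambda> \<xi> b \<beta> h (\<omega>, t) = bc_ind \<Lambda> b t * (\<Prod>e\<in>all_edges \<Lambda> h. sqrt (1 - edge_p \<beta> h t e) *
        (edge_p \<beta> h t e / (1 - edge_p \<beta> h t e)) ^ (if \<omega> e then 1 else 0))
        * 2 ^ num_clusters \<Lambda> \<xi> (all_edges \<Lambda> h) \<omega>"
    by (simp add: psi_weight_def)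
  then show ?thesis using bc P by simp
qed

locale PS =
  fixes g a :: real and \<Lambda> :: "'d::finite site set" and \<xi> :: "'d site set set"
    and b h :: "'d site \<Rightarrow> real" and \<beta> :: real
  assumes g: "g > 0" and fin: "finite \<Lambda>" and part: "partition_on (ext_bd \<Lambda>) \<xi>"
    and bpos: "\<forall>x\<in>ext_bd \<Lambda>. b x \<ge> 0" and hpos: "\<forall>x\<in>\<Lambda>. h x \<ge> 0" and beta: "\<beta> \<ge> 0"
begin

abbreviation "\<Omega> \<equiv> configs (all_edges \<Lambda> h)"
abbreviation "AB \<equiv> A_base g a \<Lambda> b"
abbreviation "JB \<equiv> joint_base g a \<Lambda> b h"
abbreviation "ZP \<equiv> Z_Psi g a \<Lambda> \<xi> b \<beta> h"
abbreviation "psi \<equiv> psi_weight \<Lambda> \<xi> b \<beta> h"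

lemma finO: "finite \<Omega>"
  unfolding configs_def by (intro finite_PiE finite_all_edges fin) auto

lemma JB_eq: "JB = count_space \<Omega> \<Otimes>\<^sub>M AB"
  by (simp add: joint_base_def)

sublocale AB: prob_space AB by (rule prob_A_base[OF g])

lemma psi_meas_J[measurable]: "psi \<in> borel_measurable JB"
  unfolding JB_eq
  by (rule measurable_pair_measure_countable1[OF countable_finite[OF finO]])
     (rule psi_sec_meas[OF fin])

lemma nn_J:
  assumes F: "F \<in> borel_measurable JB"
  shows "(\<integral>\<^sup>+ z. F z \<partial>JB) = (\<Sum>\<omega>\<in>\<Omega>. \<integral>\<^sup>+ t. F (\<omega>, t) \<partial>AB)"
proof -
  have "(\<integral>\<^sup>+ z. F z \<partial>JB) = (\<integral>\<^sup>+ \<omega>. \<integral>\<^sup>+ t. F (\<omega>, t) \<partial>AB \<partial>count_space \<Omega>)"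
    using F unfolding JB_eq by (rule AB.nn_integral_fst[symmetric])
  also have "\<dots> = (\<Sum>\<omega>\<in>\<Omega>. \<integral>\<^sup>+ t. F (\<omega>, t) \<partial>AB)"
    by (rule nn_integral_count_space_finite[OF finO])
  finally show ?thesis .
qed

lemma AE_J:
  assumes "AE t in AB. P t"
  shows "AE z in JB. P (snd z)"
proof -
  from assms obtain N where N0: "{t \<in> space AB. \<not> P t} \<subseteq> N" "emeasure AB N = 0" "N \<in> sets AB"
    by (rule AE_E)
  then have N: "N \<in> null_sets AB" "{t \<in> space AB. \<not> P t} \<subseteq> N" by auto
  have "\<Omega> \<times> N \<in> null_sets JB"
  proof -
    have "\<Omega> \<times> N \<in> sets JB" using N unfolding JB_eq by auto
    moreover have "emeasure JB (\<Omega> \<times> N) = 0"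
      unfolding JB_eq using N by (subst AB.emeasure_pair_measure_Times) auto
    ultimately show ?thesis by auto
  qed
  moreover have "{z \<in> space JB. \<not> P (snd z)} \<subseteq> \<Omega> \<times> N"
    using N unfolding JB_eq by (auto simp: space_pair_measure)
  ultimately show ?thesis by (rule AE_I')
qed

lemma AE_psi_nonneg: "AE t in AB. \<forall>\<omega>. 0 \<le> psi (\<omega>, t)"
  using AE_A_base_nonneg[OF g fin bpos]
  by eventually_elim (use psi_nonneg hpos beta in auto)

lemma ZP_nonneg: "0 \<le> ZP"
proof -
  have "AE z in JB. 0 \<le> psi z"
    using AE_J[OF AE_psi_nonneg] by eventually_elim auto
  then show ?thesis unfolding Z_Psi_def by (rule integral_nonneg_AE)
qed

abbreviation "Psi0 \<equiv> Psi g a \<Lambda> \<xi> b \<beta> h"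
abbreviation "mu0 \<equiv> mu g a \<Lambda> \<xi> b \<beta> h"

definition Gd :: "('d site \<Rightarrow> real) \<Rightarrow> ennreal" where
  "Gd t = ennreal (2 * bc_ind \<Lambda> b t * Z_Ising \<Lambda> \<xi> \<beta> h t / ZP)"

lemma Gd_meas[measurable]: "Gd \<in> borel_measurable AB"
  unfolding Gd_def[abs_def] using fin by measurable

lemma f_meas[measurable]: "(\<lambda>z. ennreal (psi z / ZP)) \<in> borel_measurable JB"
  by measurable

lemma sets_Psi0[measurable_cong]: "sets Psi0 = sets JB"
  by (simp add: Psi_def)

lemma space_Psi0: "space Psi0 = space JB"
  by (simp add: Psi_def)

lemma space_JB: "space JB = \<Omega> \<times> space AB"
  by (simp add: JB_eq space_pair_measure)

lemma snd_meas: "snd \<in> measurable Psi0 AB"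
proof -
  have "snd \<in> measurable JB AB" unfolding JB_eq by (rule measurable_snd)
  moreover have "measurable Psi0 AB = measurable JB AB" by (rule measurable_cong_sets) (simp_all add: sets_Psi0)
  ultimately show ?thesis by simp
qed

lemma emeasure_Psi0:
  assumes X: "X \<in> sets JB"
  shows "emeasure Psi0 X = (\<Sum>\<omega>\<in>\<Omega>. \<integral>\<^sup>+ t. ennreal (psi (\<omega>, t) / ZP) * indicator X (\<omega>, t) \<partial>AB)"
proof -
  have "emeasure Psi0 X = (\<integral>\<^sup>+ z. ennreal (psi z / ZP) * indicator X z \<partial>JB)"
    unfolding Psi_def by (rule emeasure_density[OF f_meas X])
  also have "\<dots> = (\<Sum>\<omega>\<in>\<Omega>. \<integral>\<^sup>+ t. ennreal (psi (\<omega>, t) / ZP) * indicator X (\<omega>, t) \<partial>AB)"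
    using X by (intro nn_J borel_measurable_times_ennreal f_meas borel_measurable_indicator)
  finally show ?thesis .
qed

lemma psi_ratio_sum:
  "AE t in AB. (\<Sum>\<omega>\<in>\<Omega>. ennreal (psi (\<omega>, t) / ZP)) = Gd t"
  using AE_psi_nonneg
proof eventually_elim
  case (elim t)
  have "(\<Sum>\<omega>\<in>\<Omega>. ennreal (psi (\<omega>, t) / ZP)) = ennreal (\<Sum>\<omega>\<in>\<Omega>. psi (\<omega>, t) / ZP)"
    using elim ZP_nonneg by (intro sum_ennreal) auto
  also have "(\<Sum>\<omega>\<in>\<Omega>. psi (\<omega>, t) / ZP) = (\<Sum>\<omega>\<in>\<Omega>. psi (\<omega>, t)) / ZP"
    by (simp add: sum_divide_distrib)
  also have "\<dots> = 2 * bc_ind \<Lambda> b t * Z_Ising \<Lambda> \<xi> \<beta> h t / ZP"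
    by (simp add: ES_concrete[OF fin part])
  finally show ?case by (simp add: Gd_def)
qed

lemma claim2: "mu0 = density AB Gd"
proof (rule measure_eqI)
  show "sets mu0 = sets (density AB Gd)" by (simp add: mu_def)
  fix B assume "B \<in> sets mu0"
  then have B[measurable]: "B \<in> sets AB" by (simp add: mu_def)
  have "emeasure mu0 B = emeasure Psi0 (snd -` B \<inter> space Psi0)"
    unfolding mu_def by (rule emeasure_distr[OF snd_meas B])
  also have "\<dots> = (\<Sum>\<omega>\<in>\<Omega>. \<integral>\<^sup>+ t. ennreal (psi (\<omega>, t) / ZP) * indicator (snd -` B \<inter> space JB) (\<omega>, t) \<partial>AB)"
    unfolding space_Psi0 by (rule emeasure_Psi0) (simp add: JB_eq)
  also have "\<dots> = (\<Sum>\<omega>\<in>\<Omega>. \<integral>\<^sup>+ t. ennreal (psi (\<omega>, t) / ZP) * indicator B t \<partial>AB)"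
  proof (rule sum.cong[OF refl], rule nn_integral_cong)
    fix \<omega> t assume "\<omega> \<in> \<Omega>" "t \<in> space AB"
    then show "ennreal (psi (\<omega>, t) / ZP) * indicator (snd -` B \<inter> space JB) (\<omega>, t)
        = ennreal (psi (\<omega>, t) / ZP) * indicator B t"
      by (simp add: space_JB indicator_def)
  qed
  also have "\<dots> = (\<integral>\<^sup>+ t. (\<Sum>\<omega>\<in>\<Omega>. ennreal (psi (\<omega>, t) / ZP) * indicator B t) \<partial>AB)"
    by (rule nn_integral_sum[symmetric]) (use fin in measurable)
  also have "\<dots> = (\<integral>\<^sup>+ t. Gd t * indicator B t \<partial>AB)"
    using psi_ratio_sum
    by (intro nn_integral_cong_AE) (auto simp: sum_distrib_right[symmetric])
  also have "\<dots> = emeasure (density AB Gd) B"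
    by (rule emeasure_density[symmetric]) simp_all
  finally show "emeasure mu0 B = emeasure (density AB Gd) B" .
qed

lemma claim1:
  assumes \<omega>: "\<omega> \<in> \<Omega>" and B[measurable]: "B \<in> sets AB"
  shows "emeasure Psi0 ({\<omega>} \<times> B) = (\<integral>\<^sup>+ t\<in>B. ennreal (phiFK \<Lambda> \<xi> \<beta> h t \<omega>) \<partial>mu0)"
proof -
  have X: "{\<omega>} \<times> B \<in> sets JB" unfolding JB_eq using \<omega> B by auto
  have "emeasure Psi0 ({\<omega>} \<times> B)
      = (\<Sum>\<omega>'\<in>\<Omega>. \<integral>\<^sup>+ t. ennreal (psi (\<omega>', t) / ZP) * indicator ({\<omega>} \<times> B) (\<omega>', t) \<partial>AB)"
    by (rule emeasure_Psi0[OF X])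
  also have "\<dots> = (\<Sum>\<omega>'\<in>\<Omega>. if \<omega>' = \<omega> then (\<integral>\<^sup>+ t. ennreal (psi (\<omega>, t) / ZP) * indicator B t \<partial>AB) else 0)"
    by (rule sum.cong[OF refl]) (auto simp: indicator_def)
  also have "\<dots> = (\<integral>\<^sup>+ t. ennreal (psi (\<omega>, t) / ZP) * indicator B t \<partial>AB)"
    using \<omega> finO by simp
  also have "\<dots> = (\<integral>\<^sup>+ t. Gd t * (ennreal (phiFK \<Lambda> \<xi> \<beta> h t \<omega>) * indicator B t) \<partial>AB)"
  proof (rule nn_integral_cong)
    fix t
    have nn: "0 \<le> 2 * bc_ind \<Lambda> b t * Z_Ising \<Lambda> \<xi> \<beta> h t / ZP"
      using ZP_nonneg Z_Ising_pos[OF fin part, of \<beta> h t]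
      by (intro divide_nonneg_nonneg mult_nonneg_nonneg) (auto simp: bc_ind_def)
    have e: "psi (\<omega>, t) / ZP = (2 * bc_ind \<Lambda> b t * Z_Ising \<Lambda> \<xi> \<beta> h t / ZP) * phiFK \<Lambda> \<xi> \<beta> h t \<omega>"
      unfolding psi_phi[OF fin part] by (simp add: ac_simps)
    have "ennreal (psi (\<omega>, t) / ZP) = Gd t * ennreal (phiFK \<Lambda> \<xi> \<beta> h t \<omega>)"
      unfolding e Gd_def by (rule ennreal_mult'[OF nn])
    then show "ennreal (psi (\<omega>, t) / ZP) * indicator B t
        = Gd t * (ennreal (phiFK \<Lambda> \<xi> \<beta> h t \<omega>) * indicator B t)"
      by (simp add: mult.assoc)
  qed
  also have "\<dots> = (\<integral>\<^sup>+ t. ennreal (phiFK \<Lambda> \<xi> \<beta> h t \<omega>) * indicator B t \<partial>density AB Gd)"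
    by (rule nn_integral_density[symmetric]) measurable
  also have "\<dots> = (\<integral>\<^sup>+ t\<in>B. ennreal (phiFK \<Lambda> \<xi> \<beta> h t \<omega>) \<partial>mu0)"
    by (simp add: claim2)
  finally show ?thesis .
qed

end

lemma sum_PiE_restrict:
  fixes f :: "('i \<Rightarrow> 'a) \<Rightarrow> real"
  assumes I: "finite I" and J: "finite J" and dis: "I \<inter> J = {}"
  shows "(\<Sum>\<sigma>\<in>PiE (I \<union> J) (\<lambda>_. S). f (restrict \<sigma> I))
       = real (card (PiE J (\<lambda>_. S))) * (\<Sum>\<tau>\<in>PiE I (\<lambda>_. S). f \<tau>)"
proof -
  let ?m = "merge I J"
  have inj: "inj_on ?m (PiE I (\<lambda>_. S) \<times> PiE J (\<lambda>_. S))"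
  proof (rule inj_onI)
    fix p q assume p: "p \<in> PiE I (\<lambda>_. S) \<times> PiE J (\<lambda>_. S)" and q: "q \<in> PiE I (\<lambda>_. S) \<times> PiE J (\<lambda>_. S)"
      and e: "?m p = ?m q"
    obtain x y where [simp]: "p = (x, y)" by (cases p)
    obtain x' y' where [simp]: "q = (x', y')" by (cases q)
    have "restrict (?m p) I = restrict (?m q) I" "restrict (?m p) J = restrict (?m q) J" using e by simp_all
    then have "restrict x I = restrict x' I" "restrict y J = restrict y' J" using dis by simp_all
    moreover have "restrict x I = x" "restrict x' I = x'" "restrict y J = y" "restrict y' J = y'"
      using p q by (auto simp: restrict_PiE)
    ultimately show "p = q" by simp
  qed
  have img: "?m ` (PiE I (\<lambda>_. S) \<times> PiE J (\<lambda>_. S)) = PiE (I \<union> J) (\<lambda>_. S)"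
  proof (intro equalityI subsetI)
    fix \<sigma> assume "\<sigma> \<in> ?m ` (PiE I (\<lambda>_. S) \<times> PiE J (\<lambda>_. S))"
    then obtain x y where xy: "x \<in> PiE I (\<lambda>_. S)" "y \<in> PiE J (\<lambda>_. S)" "\<sigma> = ?m (x, y)" by auto
    show "\<sigma> \<in> PiE (I \<union> J) (\<lambda>_. S)"
      using xy by (auto simp: PiE_iff merge_def extensional_def)
  next
    fix \<sigma> assume s: "\<sigma> \<in> PiE (I \<union> J) (\<lambda>_. S)"
    have "\<sigma> = ?m (restrict \<sigma> I, restrict \<sigma> J)"
      using s by (auto simp: merge_def PiE_iff extensional_def fun_eq_iff)
    moreover have "(restrict \<sigma> I, restrict \<sigma> J) \<in> PiE I (\<lambda>_. S) \<times> PiE J (\<lambda>_. S)"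
      using s by (auto simp: PiE_iff)
    ultimately show "\<sigma> \<in> ?m ` (PiE I (\<lambda>_. S) \<times> PiE J (\<lambda>_. S))" by blast
  qed
  have "(\<Sum>\<sigma>\<in>PiE (I \<union> J) (\<lambda>_. S). f (restrict \<sigma> I))
      = (\<Sum>p\<in>PiE I (\<lambda>_. S) \<times> PiE J (\<lambda>_. S). f (restrict (?m p) I))"
    unfolding img[symmetric] by (rule sum.reindex[OF inj, unfolded comp_def])
  also have "\<dots> = (\<Sum>x\<in>PiE I (\<lambda>_. S). \<Sum>y\<in>PiE J (\<lambda>_. S). f (restrict (?m (x, y)) I))"
    by (rule sum.cartesian_product')
  also have "\<dots> = (\<Sum>x\<in>PiE I (\<lambda>_. S). \<Sum>y\<in>PiE J (\<lambda>_. S). f x)"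
  proof (rule sum.cong[OF refl], rule sum.cong[OF refl])
    fix x y assume "x \<in> PiE I (\<lambda>_. S)"
    then show "f (restrict (?m (x, y)) I) = f x" using dis by (simp add: restrict_PiE)
  qed
  also have "\<dots> = real (card (PiE J (\<lambda>_. S))) * (\<Sum>\<tau>\<in>PiE I (\<lambda>_. S). f \<tau>)"
    by (simp add: sum_distrib_left)
  finally show ?thesis .
qed

definition ZL :: "'d::finite site set \<Rightarrow> real \<Rightarrow> ('d site \<Rightarrow> real) \<Rightarrow> ('d site \<Rightarrow> real) \<Rightarrow> real" where
  "ZL \<Lambda> \<beta> h s = (\<Sum>\<tau>\<in>PiE \<Lambda> (\<lambda>_. {-1, 1}). nu_weight \<Lambda> \<beta> h (\<lambda>x\<in>\<Lambda>. \<tau> x * s x))"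

lemma free_summand:
  assumes fin: "finite \<Lambda>" and t0: "\<forall>y\<in>ext_bd \<Lambda>. t y = 0"
  shows "exp (\<beta> * (\<Sum>e\<in>bar_edges \<Lambda>. \<Prod>x\<in>{x. Some x \<in> e}. t x * \<sigma> x)
             + \<beta> * (\<Sum>x\<in>\<Lambda>. h x * t x * \<sigma> x))
       = nu_weight \<Lambda> \<beta> h (\<lambda>x\<in>\<Lambda>. \<sigma> x * t x)"
proof -
  have sub: "inner_edges \<Lambda> \<subseteq> bar_edges \<Lambda>" by (auto simp: inner_edges_def bar_edges_def)
  have z: "(\<Prod>x\<in>{x. Some x \<in> e}. t x * \<sigma> x) = 0" if e: "e \<in> bar_edges \<Lambda> - inner_edges \<Lambda>" for e
  proof -
    obtain x y where xy: "e = {Some x, Some y}" "x \<in> \<Lambda>" "adj x y" using e by (auto simp: bar_edges_def)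
    have "y \<notin> \<Lambda>" using e xy by (auto simp: inner_edges_def)
    then have "y \<in> ext_bd \<Lambda>" using xy by (auto simp: ext_bd_def)
    then have ty: "t y = 0" using t0 by auto
    have s: "{z. Some z \<in> e} = {x, y}" using xy by auto
    show ?thesis unfolding s using ty by (simp add: prod_zero_iff)
  qed
  have "(\<Sum>e\<in>bar_edges \<Lambda>. \<Prod>x\<in>{x. Some x \<in> e}. t x * \<sigma> x)
      = (\<Sum>e\<in>inner_edges \<Lambda>. \<Prod>x\<in>{x. Some x \<in> e}. t x * \<sigma> x)"
    by (rule sum.mono_neutral_right[OF finite_bar_edges[OF fin] sub]) (use z in blast)
  also have "\<dots> = (\<Sum>e\<in>inner_edges \<Lambda>. \<Prod>x\<in>{x. Some x \<in> e}. (\<lambda>x\<in>\<Lambda>. \<sigma> x * t x) x)"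
  proof (rule sum.cong[OF refl], rule prod.cong[OF refl])
    fix e x assume "e \<in> inner_edges \<Lambda>" "x \<in> {x. Some x \<in> e}"
    then have "x \<in> \<Lambda>" by (auto simp: inner_edges_def)
    then show "t x * \<sigma> x = (\<lambda>x\<in>\<Lambda>. \<sigma> x * t x) x" by simp
  qed
  finally have b: "(\<Sum>e\<in>bar_edges \<Lambda>. \<Prod>x\<in>{x. Some x \<in> e}. t x * \<sigma> x)
      = (\<Sum>e\<in>inner_edges \<Lambda>. \<Prod>x\<in>{x. Some x \<in> e}. (\<lambda>x\<in>\<Lambda>. \<sigma> x * t x) x)" .
  have hh: "(\<Sum>x\<in>\<Lambda>. h x * t x * \<sigma> x) = (\<Sum>x\<in>\<Lambda>. h x * (\<lambda>x\<in>\<Lambda>. \<sigma> x * t x) x)"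
    by (rule sum.cong) auto
  show ?thesis unfolding nu_weight_def b hh ..
qed

lemma Z_Ising_free:
  assumes fin: "finite \<Lambda>" and t0: "\<forall>y\<in>ext_bd \<Lambda>. t y = 0"
  shows "Z_Ising \<Lambda> (free_xi \<Lambda>) \<beta> h t = 2 ^ card (ext_bd \<Lambda>) * ZL \<Lambda> \<beta> h (restrict t \<Lambda>)"
proof -
  have S: "{\<sigma> \<in> PiE (Lbar \<Lambda>) (\<lambda>_. {-1, 1::real}). \<forall>C\<in>free_xi \<Lambda>. \<forall>x\<in>C. \<forall>y\<in>C. \<sigma> x = \<sigma> y}
      = PiE (Lbar \<Lambda>) (\<lambda>_. {-1, 1})"
    by (auto simp: free_xi_def)
  have dis: "\<Lambda> \<inter> ext_bd \<Lambda> = {}" by (auto simp: ext_bd_def)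
  have "Z_Ising \<Lambda> (free_xi \<Lambda>) \<beta> h t
      = (\<Sum>\<sigma>\<in>PiE (\<Lambda> \<union> ext_bd \<Lambda>) (\<lambda>_. {-1, 1}). nu_weight \<Lambda> \<beta> h (\<lambda>x\<in>\<Lambda>. restrict \<sigma> \<Lambda> x * t x))"
    unfolding Z_Ising_def S Lbar_def[symmetric] free_summand[OF fin t0]
    by (rule sum.cong) (auto intro!: arg_cong[where f="nu_weight \<Lambda> \<beta> h"])
  also have "\<dots> = real (card (PiE (ext_bd \<Lambda>) (\<lambda>_. {-1, 1::real})))
      * (\<Sum>\<tau>\<in>PiE \<Lambda> (\<lambda>_. {-1, 1}). nu_weight \<Lambda> \<beta> h (\<lambda>x\<in>\<Lambda>. \<tau> x * t x))"
    by (rule sum_PiE_restrict[OF fin finite_ext_bd[OF fin] dis, where f = "\<lambda>\<tau>. nu_weight \<Lambda> \<beta> h (\<lambda>x\<in>\<Lambda>. \<tau> x * t x)"])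
  also have "(\<Sum>\<tau>\<in>PiE \<Lambda> (\<lambda>_. {-1, 1}). nu_weight \<Lambda> \<beta> h (\<lambda>x\<in>\<Lambda>. \<tau> x * t x)) = ZL \<Lambda> \<beta> h (restrict t \<Lambda>)"
    unfolding ZL_def
    by (rule sum.cong) (auto intro!: arg_cong[where f="nu_weight \<Lambda> \<beta> h"])
  also have "real (card (PiE (ext_bd \<Lambda>) (\<lambda>_. {-1, 1::real}))) = 2 ^ card (ext_bd \<Lambda>)"
    using finite_ext_bd[OF fin] by (simp add: card_PiE)
  finally show ?thesis .
qed

lemma distr_PiM_gen:
  assumes fin: "finite I"
  assumes M: "\<And>i. i \<in> I \<Longrightarrow> prob_space (M i)"
  assumes M': "\<And>i. i \<in> I \<Longrightarrow> prob_space (M' i)"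
  assumes f[measurable]: "\<And>i. i \<in> I \<Longrightarrow> f i \<in> measurable (M i) (M' i)"
  shows "distr (PiM I M) (PiM I M') (\<lambda>x. \<lambda>i\<in>I. f i (x i)) = PiM I (\<lambda>i. distr (M i) (M' i) (f i))"
proof -
  define N where "N = (\<lambda>i. if i \<in> I then distr (M i) (M' i) (f i) else return (count_space UNIV) undefined)"
  define MM where "MM = (\<lambda>i. if i \<in> I then M i else return (count_space UNIV) undefined)"
  have pN: "prob_space (N i)" for i
    by (auto simp: N_def intro!: prob_space.prob_space_distr M f prob_space_return)
  have pMM: "prob_space (MM i)" for i
    by (auto simp: MM_def intro!: M prob_space_return)
  interpret N: product_prob_space N by (intro product_prob_spaceI pN)
  interpret MM: product_prob_space MM by (intro product_prob_spaceI pMM)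
  have PMM: "PiM I MM = PiM I M" by (intro PiM_cong) (auto simp: MM_def)
  have PN: "PiM I N = PiM I (\<lambda>i. distr (M i) (M' i) (f i))" by (intro PiM_cong) (auto simp: N_def)
  have meas: "(\<lambda>x. \<lambda>i\<in>I. f i (x i)) \<in> measurable (PiM I M) (PiM I M')"
    by measurable
  have "distr (PiM I M) (PiM I M') (\<lambda>x. \<lambda>i\<in>I. f i (x i)) = PiM I N"
  proof (rule N.PiM_eqI[OF fin])
    show "sets (distr (PiM I M) (PiM I M') (\<lambda>x. \<lambda>i\<in>I. f i (x i))) = sets (PiM I N)"
      by (simp add: N_def cong: sets_PiM_cong)
    fix A assume A: "\<And>i. i \<in> I \<Longrightarrow> A i \<in> sets (N i)"
    have AM': "A i \<in> sets (M' i)" if "i \<in> I" for i using A[OF that] that by (simp add: N_def)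
    have "emeasure (distr (PiM I M) (PiM I M') (\<lambda>x. \<lambda>i\<in>I. f i (x i))) (PiE I A)
        = emeasure (PiM I M) ((\<lambda>x. \<lambda>i\<in>I. f i (x i)) -` PiE I A \<inter> space (PiM I M))"
      by (rule emeasure_distr[OF meas]) (use AM' fin in \<open>auto intro: sets_PiM_I_finite\<close>)
    also have "(\<lambda>x. \<lambda>i\<in>I. f i (x i)) -` PiE I A \<inter> space (PiM I M) = PiE I (\<lambda>i. f i -` A i \<inter> space (M i))"
      by (auto simp: space_PiM PiE_def Pi_def extensional_def)
    also have "emeasure (PiM I M) (PiE I (\<lambda>i. f i -` A i \<inter> space (M i)))
        = emeasure (PiM I MM) (PiE I (\<lambda>i. f i -` A i \<inter> space (M i)))" by (simp add: PMM)
    also have "\<dots> = (\<Prod>i\<in>I. emeasure (MM i) (f i -` A i \<inter> space (M i)))"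
      using AM' by (intro MM.emeasure_PiM fin) (auto simp: MM_def)
    also have "\<dots> = (\<Prod>i\<in>I. emeasure (N i) (A i))"
      using AM' by (intro prod.cong refl) (simp add: MM_def N_def emeasure_distr)
    finally show "emeasure (distr (PiM I M) (PiM I M') (\<lambda>x. \<lambda>i\<in>I. f i (x i))) (PiE I A) = (\<Prod>i\<in>I. emeasure (N i) (A i))" .
  qed
  then show ?thesis using PN by simp
qed

lemma rho_sym:
  assumes c: "c \<in> {-1, 1::real}"
  shows "distr (rho g a) borel (\<lambda>y. c * y) = rho g a"
proof (rule measure_eqI)
  show "sets (distr (rho g a) borel (\<lambda>y. c * y)) = sets (rho g a)" by simp
  fix A :: "real set" assume "A \<in> sets (distr (rho g a) borel (\<lambda>y. c * y))"
  then have A[measurable]: "A \<in> sets borel" by simp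
  have pre[measurable]: "(\<lambda>y. c * y) -` A \<in> sets borel"
    by (rule measurable_sets_borel[OF _ A]) simp
  have c0: "c \<noteq> 0" and ac: "\<bar>c\<bar> = 1" and cc: "c * c = 1" using c by auto
  have ev: "phi4_density g a (c * x) = phi4_density g a x" for x
    using c by (auto simp: phi4_density_def)
  have fe: "(\<lambda>x. ennreal (phi4_density g a (0 + c * x) / Nrho g a) * indicator ((\<lambda>y. c * y) -` A) (0 + c * x))
      = (\<lambda>x. ennreal (phi4_density g a x / Nrho g a) * indicator A x)"
  proof
    fix x
    have "indicator ((\<lambda>y. c * y) -` A) (c * x) = (indicator A x :: ennreal)"
      using cc by (simp add: indicator_def mult.assoc[symmetric])
    then show "ennreal (phi4_density g a (0 + c * x) / Nrho g a) * indicator ((\<lambda>y. c * y) -` A) (0 + c * x)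
      = ennreal (phi4_density g a x / Nrho g a) * indicator A x" using ev by simp
  qed
  have "emeasure (distr (rho g a) borel (\<lambda>y. c * y)) A = emeasure (rho g a) ((\<lambda>y. c * y) -` A)"
    by (subst emeasure_distr) (auto simp: measurable_cong_sets[OF sets_rho refl])
  also have "\<dots> = (\<integral>\<^sup>+ x. ennreal (phi4_density g a x / Nrho g a) * indicator ((\<lambda>y. c * y) -` A) x \<partial>lborel)"
    unfolding rho_alt by (rule emeasure_density) auto
  also have "\<dots> = \<bar>c\<bar> * (\<integral>\<^sup>+ x. ennreal (phi4_density g a (0 + c * x) / Nrho g a) * indicator ((\<lambda>y. c * y) -` A) (0 + c * x) \<partial>lborel)"
    by (rule nn_integral_real_affine[OF _ c0]) measurable
  also have "\<dots> = (\<integral>\<^sup>+ x. ennreal (phi4_density g a x / Nrho g a) * indicator A x \<partial>lborel)"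
    unfolding fe ac by simp
  also have "\<dots> = emeasure (rho g a) A"
    unfolding rho_alt by (rule emeasure_density[symmetric]) auto
  finally show "emeasure (distr (rho g a) borel (\<lambda>y. c * y)) A = emeasure (rho g a) A" .
qed

abbreviation "RL g a \<Lambda> \<equiv> PiM \<Lambda> (\<lambda>_. rho g a)"
abbreviation "RT g a \<Lambda> \<equiv> PiM \<Lambda> (\<lambda>_. rho_tilde g a)"
abbreviation "PB \<Lambda> \<equiv> PiM \<Lambda> (\<lambda>_. (borel :: real measure))"

definition Tm :: "'d site set \<Rightarrow> ('d site \<Rightarrow> real) \<Rightarrow> ('d site \<Rightarrow> real) \<Rightarrow> 'd site \<Rightarrow> real" where
  "Tm \<Lambda> \<sigma> \<phi> = (\<lambda>x\<in>\<Lambda>. \<sigma> x * \<phi> x)"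

definition absm :: "'d site set \<Rightarrow> ('d site \<Rightarrow> real) \<Rightarrow> 'd site \<Rightarrow> real" where
  "absm \<Lambda> \<phi> = (\<lambda>x\<in>\<Lambda>. \<bar>\<phi> x\<bar>)"

lemma comp_meas_PiM:
  assumes "\<And>i. i \<in> I \<Longrightarrow> sets (M i) = sets (borel :: real measure)"
  shows "(\<lambda>t. t x) \<in> borel_measurable (PiM I M)"
proof (cases "x \<in> I")
  case True
  have "(\<lambda>t. t x) \<in> measurable (PiM I M) (M x)" by (rule measurable_component_singleton[OF True])
  moreover have "measurable (PiM I M) (M x) = borel_measurable (PiM I M)"
    by (rule measurable_cong_sets) (simp_all add: assms True)
  ultimately show ?thesis by simp
next
  case False
  have "(\<lambda>t. undefined :: real) \<in> borel_measurable (PiM I M)" by simp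
  then show ?thesis
    by (rule measurable_cong[THEN iffD1, rotated]) (use False in \<open>auto simp: space_PiM PiE_def extensional_def\<close>)
qed

lemma comp_RL[measurable]: "(\<lambda>t. t x) \<in> borel_measurable (RL g a \<Lambda>)"
  by (rule comp_meas_PiM) simp
lemma comp_RT[measurable]: "(\<lambda>t. t x) \<in> borel_measurable (RT g a \<Lambda>)"
  by (rule comp_meas_PiM) simp
lemma comp_PB[measurable]: "(\<lambda>t. t x) \<in> borel_measurable (PB \<Lambda>)"
  by (rule comp_meas_PiM) simp

lemma sets_RL[measurable_cong]: "sets (RL g a \<Lambda>) = sets (PB \<Lambda>)"
  by (rule sets_PiM_cong) auto
lemma sets_RT[measurable_cong]: "sets (RT g a \<Lambda>) = sets (PB \<Lambda>)"
  by (rule sets_PiM_cong) auto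

lemma nu_weight_meas[measurable]: "nu_weight \<Lambda> \<beta> h \<in> borel_measurable (RL g a \<Lambda>')"
  unfolding nu_weight_def[abs_def] by measurable

lemma ZL_meas_PB[measurable]: "ZL \<Lambda> \<beta> h \<in> borel_measurable (PB \<Lambda>')"
  unfolding ZL_def[abs_def] nu_weight_def by measurable

lemma absm_meas[measurable]: "absm \<Lambda> \<in> measurable (RL g a \<Lambda>) (PB \<Lambda>)"
  unfolding absm_def[abs_def] by measurable

lemma Tm_meas: "Tm \<Lambda> \<sigma> \<in> measurable (RL g a \<Lambda>) (RL g a \<Lambda>)"
  unfolding Tm_def[abs_def] by measurable

lemma RL_inv:
  assumes g: "g > 0" and fin: "finite \<Lambda>" and \<sigma>: "\<sigma> \<in> PiE \<Lambda> (\<lambda>_. {-1, 1})"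
  shows "distr (RL g a \<Lambda>) (RL g a \<Lambda>) (Tm \<Lambda> \<sigma>) = RL g a \<Lambda>"
proof -
  have "distr (RL g a \<Lambda>) (RL g a \<Lambda>) (\<lambda>\<phi>. \<lambda>x\<in>\<Lambda>. (\<lambda>y. \<sigma> x * y) (\<phi> x))
      = PiM \<Lambda> (\<lambda>x. distr (rho g a) (rho g a) (\<lambda>y. \<sigma> x * y))"
    by (rule distr_PiM_gen[OF fin prob_rho[OF g] prob_rho[OF g]]) simp
  also have "\<dots> = RL g a \<Lambda>"
  proof (rule PiM_cong[OF refl])
    fix x assume "x \<in> \<Lambda>"
    then have c: "\<sigma> x \<in> {-1, 1}" using \<sigma> by auto
    have "distr (rho g a) (rho g a) (\<lambda>y. \<sigma> x * y) = distr (rho g a) borel (\<lambda>y. \<sigma> x * y)"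
      by (rule distr_cong) simp_all
    then show "distr (rho g a) (rho g a) (\<lambda>y. \<sigma> x * y) = rho g a" using rho_sym[OF c] by simp
  qed
  finally show ?thesis unfolding Tm_def by simp
qed

lemma RL_abs:
  assumes g: "g > 0" and fin: "finite \<Lambda>"
  shows "distr (RL g a \<Lambda>) (PB \<Lambda>) (absm \<Lambda>) = RT g a \<Lambda>"
proof -
  have "distr (RL g a \<Lambda>) (RT g a \<Lambda>) (compose \<Lambda> abs) = PiM \<Lambda> (\<lambda>_. distr (rho g a) (rho_tilde g a) abs)"
    by (rule distr_PiM_finite_prob_space'[OF fin prob_rho[OF g] prob_rho_tilde[OF g]]) simp
  also have "\<dots> = RT g a \<Lambda>"
  proof (rule PiM_cong[OF refl])
    fix x
    show "distr (rho g a) (rho_tilde g a) abs = rho_tilde g a"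
      unfolding rho_tilde_def by (rule distr_cong) simp_all
  qed
  finally have e: "distr (RL g a \<Lambda>) (RT g a \<Lambda>) (compose \<Lambda> abs) = RT g a \<Lambda>" .
  have "distr (RL g a \<Lambda>) (PB \<Lambda>) (absm \<Lambda>) = distr (RL g a \<Lambda>) (RT g a \<Lambda>) (compose \<Lambda> abs)"
    by (rule distr_cong) (simp_all add: sets_RT absm_def compose_def)
  then show ?thesis using e by simp
qed

lemma sum_Tm:
  assumes fin: "finite \<Lambda>"
  shows "(\<Sum>\<sigma>\<in>PiE \<Lambda> (\<lambda>_. {-1, 1}). nu_weight \<Lambda> \<beta> h (Tm \<Lambda> \<sigma> \<phi>)) = ZL \<Lambda> \<beta> h (absm \<Lambda> \<phi>)"
proof -
  define sg where "sg = (\<lambda>x. if \<phi> x < 0 then -1 else (1::real))"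
  define m where "m = (\<lambda>\<tau>. \<lambda>x\<in>\<Lambda>. \<tau> x * sg x)"
  let ?S = "PiE \<Lambda> (\<lambda>_. {-1, 1::real})"
  have sg2: "sg x * sg x = 1" for x by (simp add: sg_def)
  have mS: "m \<tau> \<in> ?S" if "\<tau> \<in> ?S" for \<tau>
    using that by (auto simp: m_def sg_def PiE_iff)
  have mm: "m (m \<tau>) = \<tau>" if "\<tau> \<in> ?S" for \<tau>
  proof
    fix x show "m (m \<tau>) x = \<tau> x"
      using that sg2[of x] by (auto simp: m_def PiE_iff extensional_def mult.assoc)
  qed
  have bij: "bij_betw m ?S ?S"
    by (rule bij_betwI[where g = m]) (auto simp: mS mm)
  have T: "Tm \<Lambda> (m \<tau>) \<phi> = (\<lambda>x\<in>\<Lambda>. \<tau> x * absm \<Lambda> \<phi> x)" for \<tau>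
    by (auto simp: Tm_def m_def absm_def sg_def fun_eq_iff abs_if)
  have "(\<Sum>\<sigma>\<in>?S. nu_weight \<Lambda> \<beta> h (Tm \<Lambda> \<sigma> \<phi>)) = (\<Sum>\<tau>\<in>?S. nu_weight \<Lambda> \<beta> h (Tm \<Lambda> (m \<tau>) \<phi>))"
    by (rule sum.reindex_bij_betw[OF bij, symmetric])
  also have "\<dots> = ZL \<Lambda> \<beta> h (absm \<Lambda> \<phi>)" unfolding ZL_def T ..
  finally show ?thesis .
qed

lemma nu_weight_pos: "0 < nu_weight \<Lambda> \<beta> h \<phi>"
  by (simp add: nu_weight_def)

lemma sym_int:
  assumes g: "g > 0" and fin: "finite \<Lambda>" and F[measurable]: "F \<in> borel_measurable (PB \<Lambda>)"
  shows "2 ^ card \<Lambda> * (\<integral>\<^sup>+ \<phi>. F (absm \<Lambda> \<phi>) * ennreal (nu_weight \<Lambda> \<beta> h \<phi>) \<partial>RL g a \<Lambda>)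
       = (\<integral>\<^sup>+ s. F s * ennreal (ZL \<Lambda> \<beta> h s) \<partial>RT g a \<Lambda>)"
proof -
  let ?S = "PiE \<Lambda> (\<lambda>_. {-1, 1::real})"
  let ?w = "nu_weight \<Lambda> \<beta> h"
  have cS: "card ?S = 2 ^ card \<Lambda>" using fin by (simp add: card_PiE numeral_2_eq_2)
  have Tmeas: "Tm \<Lambda> \<sigma> \<in> measurable (RL g a \<Lambda>) (RL g a \<Lambda>)" for \<sigma> by (rule Tm_meas)
  have H[measurable]: "(\<lambda>\<phi>. F (absm \<Lambda> \<phi>) * ennreal (?w \<phi>)) \<in> borel_measurable (RL g a \<Lambda>)"
    by measurable
  have absT: "absm \<Lambda> (Tm \<Lambda> \<sigma> \<phi>) = absm \<Lambda> \<phi>" if "\<sigma> \<in> ?S" for \<sigma> \<phi>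
    using that by (auto simp: absm_def Tm_def fun_eq_iff PiE_iff abs_mult)
  have "2 ^ card \<Lambda> * (\<integral>\<^sup>+ \<phi>. F (absm \<Lambda> \<phi>) * ennreal (?w \<phi>) \<partial>RL g a \<Lambda>)
      = (\<Sum>\<sigma>\<in>?S. \<integral>\<^sup>+ \<phi>. F (absm \<Lambda> \<phi>) * ennreal (?w \<phi>) \<partial>RL g a \<Lambda>)"
    by (simp add: cS)
  also have "\<dots> = (\<Sum>\<sigma>\<in>?S. \<integral>\<^sup>+ \<phi>. F (absm \<Lambda> \<phi>) * ennreal (?w (Tm \<Lambda> \<sigma> \<phi>)) \<partial>RL g a \<Lambda>)"
  proof (rule sum.cong[OF refl])
    fix \<sigma> assume \<sigma>: "\<sigma> \<in> ?S"
    have "(\<integral>\<^sup>+ \<phi>. F (absm \<Lambda> \<phi>) * ennreal (?w \<phi>) \<partial>RL g a \<Lambda>)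
        = (\<integral>\<^sup>+ \<phi>. F (absm \<Lambda> \<phi>) * ennreal (?w \<phi>) \<partial>distr (RL g a \<Lambda>) (RL g a \<Lambda>) (Tm \<Lambda> \<sigma>))"
      by (simp add: RL_inv[OF g fin \<sigma>])
    also have "\<dots> = (\<integral>\<^sup>+ \<phi>. F (absm \<Lambda> (Tm \<Lambda> \<sigma> \<phi>)) * ennreal (?w (Tm \<Lambda> \<sigma> \<phi>)) \<partial>RL g a \<Lambda>)"
      by (rule nn_integral_distr[OF Tmeas]) simp
    also have "\<dots> = (\<integral>\<^sup>+ \<phi>. F (absm \<Lambda> \<phi>) * ennreal (?w (Tm \<Lambda> \<sigma> \<phi>)) \<partial>RL g a \<Lambda>)"
      by (simp add: absT[OF \<sigma>])
    finally show "(\<integral>\<^sup>+ \<phi>. F (absm \<Lambda> \<phi>) * ennreal (?w \<phi>) \<partial>RL g a \<Lambda>)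
        = (\<integral>\<^sup>+ \<phi>. F (absm \<Lambda> \<phi>) * ennreal (?w (Tm \<Lambda> \<sigma> \<phi>)) \<partial>RL g a \<Lambda>)" .
  qed
  also have "\<dots> = (\<integral>\<^sup>+ \<phi>. (\<Sum>\<sigma>\<in>?S. F (absm \<Lambda> \<phi>) * ennreal (?w (Tm \<Lambda> \<sigma> \<phi>))) \<partial>RL g a \<Lambda>)"
  proof (rule nn_integral_sum[symmetric])
    fix \<sigma>
    have [measurable]: "(\<lambda>\<phi>. ?w (Tm \<Lambda> \<sigma> \<phi>)) \<in> borel_measurable (RL g a \<Lambda>)"
      by (rule measurable_compose[OF Tmeas nu_weight_meas])
    show "(\<lambda>\<phi>. F (absm \<Lambda> \<phi>) * ennreal (?w (Tm \<Lambda> \<sigma> \<phi>))) \<in> borel_measurable (RL g a \<Lambda>)"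
      by measurable
  qed
  also have "\<dots> = (\<integral>\<^sup>+ \<phi>. F (absm \<Lambda> \<phi>) * ennreal (ZL \<Lambda> \<beta> h (absm \<Lambda> \<phi>)) \<partial>RL g a \<Lambda>)"
  proof (rule nn_integral_cong)
    fix \<phi>
    have "(\<Sum>\<sigma>\<in>?S. ennreal (?w (Tm \<Lambda> \<sigma> \<phi>))) = ennreal (\<Sum>\<sigma>\<in>?S. ?w (Tm \<Lambda> \<sigma> \<phi>))"
      by (rule sum_ennreal) (simp add: nu_weight_pos less_imp_le)
    then show "(\<Sum>\<sigma>\<in>?S. F (absm \<Lambda> \<phi>) * ennreal (?w (Tm \<Lambda> \<sigma> \<phi>)))
        = F (absm \<Lambda> \<phi>) * ennreal (ZL \<Lambda> \<beta> h (absm \<Lambda> \<phi>))"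
      by (simp add: sum_distrib_left[symmetric] sum_Tm[OF fin])
  qed
  also have "\<dots> = (\<integral>\<^sup>+ s. F s * ennreal (ZL \<Lambda> \<beta> h s) \<partial>distr (RL g a \<Lambda>) (PB \<Lambda>) (absm \<Lambda>))"
    by (rule nn_integral_distr[symmetric]) measurable
  also have "\<dots> = (\<integral>\<^sup>+ s. F s * ennreal (ZL \<Lambda> \<beta> h s) \<partial>RT g a \<Lambda>)"
    by (simp add: RL_abs[OF g fin])
  finally show ?thesis .
qed

lemma free_partition: "partition_on (ext_bd \<Lambda>) (free_xi \<Lambda>)"
  by (rule partition_onI) (auto simp: free_xi_def disjnt_def)

lemma restr_meas: "(\<lambda>t. restrict t \<Lambda>) \<in> measurable (A_base g a \<Lambda> b) (PB \<Lambda>)"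
proof -
  have "(\<lambda>t. restrict t \<Lambda>) \<in> measurable (PiM (Lbar \<Lambda>) (MA g a \<Lambda> b)) (PiM \<Lambda> (MA g a \<Lambda> b))"
    by (rule measurable_restrict_subset) (auto simp: Lbar_def)
  moreover have "measurable (PiM (Lbar \<Lambda>) (MA g a \<Lambda> b)) (PiM \<Lambda> (MA g a \<Lambda> b))
      = measurable (A_base g a \<Lambda> b) (PB \<Lambda>)"
    unfolding A_base_MA by (rule measurable_cong_sets) (auto intro!: sets_PiM_cong)
  ultimately show ?thesis by simp
qed

lemma A_base_restr:
  assumes g: "g > 0" and fin: "finite \<Lambda>"
  shows "distr (A_base g a \<Lambda> b) (PB \<Lambda>) (\<lambda>t. restrict t \<Lambda>) = RT g a \<Lambda>"
proof -
  interpret P: product_prob_space "MA g a \<Lambda> b"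
    by (intro product_prob_spaceI prob_MA[OF g])
  have "PiM \<Lambda> (MA g a \<Lambda> b) = distr (PiM (Lbar \<Lambda>) (MA g a \<Lambda> b)) (PiM \<Lambda> (MA g a \<Lambda> b)) (\<lambda>f. restrict f \<Lambda>)"
    by (rule P.distr_restrict) (use fin finite_ext_bd[OF fin] in \<open>auto simp: Lbar_def\<close>)
  also have "\<dots> = distr (A_base g a \<Lambda> b) (PB \<Lambda>) (\<lambda>t. restrict t \<Lambda>)"
    unfolding A_base_MA by (rule distr_cong) (auto intro!: sets_PiM_cong)
  finally have "distr (A_base g a \<Lambda> b) (PB \<Lambda>) (\<lambda>t. restrict t \<Lambda>) = PiM \<Lambda> (MA g a \<Lambda> b)" ..
  also have "\<dots> = RT g a \<Lambda>" by (rule PiM_cong) (auto simp: MA_def)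
  finally show ?thesis .
qed

locale PF =
  fixes g a :: real and \<Lambda> :: "'d::finite site set" and h :: "'d site \<Rightarrow> real" and \<beta> :: real
  assumes g: "g > 0" and fin: "finite \<Lambda>" and hpos: "\<forall>x\<in>\<Lambda>. h x \<ge> 0" and beta: "\<beta> \<ge> 0"
begin

sublocale P0: PS g a \<Lambda> "free_xi \<Lambda>" free_b h \<beta>
  by unfold_locales (use g fin hpos beta free_partition in \<open>auto simp: free_b_def\<close>)

abbreviation "nb \<equiv> card (ext_bd \<Lambda>)"
abbreviation "ZLs \<equiv> ZL \<Lambda> \<beta> h"
abbreviation "Iz \<equiv> (\<integral>\<^sup>+ s. ennreal (ZLs s) \<partial>RT g a \<Lambda>)"
abbreviation "AB0 \<equiv> A_base g a \<Lambda> free_b"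
abbreviation "ZP0 \<equiv> Z_Psi g a \<Lambda> (free_xi \<Lambda>) free_b \<beta> h"
abbreviation "Zn \<equiv> (\<integral>\<psi>. nu_weight \<Lambda> \<beta> h \<psi> \<partial>RL g a \<Lambda>)"

lemma ZL_nonneg: "0 \<le> ZLs s"
  unfolding ZL_def by (intro sum_nonneg) (simp add: nu_weight_pos less_imp_le)

lemma AE_free: "AE t in AB0. \<forall>y\<in>ext_bd \<Lambda>. t y = 0"
  using AE_A_base_bc[OF g fin, where a = a and b = free_b]
  by eventually_elim (auto simp: bc_ind_def free_b_def split: if_splits)

lemma AE_bc1: "AE t in AB0. bc_ind \<Lambda> free_b t = 1"
  by (rule AE_A_base_bc[OF g fin])

lemma AE_Zfree: "AE t in AB0. Z_Ising \<Lambda> (free_xi \<Lambda>) \<beta> h t = 2 ^ nb * ZLs (restrict t \<Lambda>)"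
  using AE_free by eventually_elim (rule Z_Ising_free[OF fin])

lemma ZP0_eq: "ZP0 = 2 * 2 ^ nb * enn2real Iz"
proof -
  have "ZP0 = enn2real (\<integral>\<^sup>+ z. ennreal (P0.psi z) \<partial>P0.JB)"
    unfolding Z_Psi_def
    by (rule integral_eq_nn_integral[OF P0.psi_meas_J])
       (use P0.AE_J[OF P0.AE_psi_nonneg] in \<open>eventually_elim, auto\<close>)
  also have "(\<integral>\<^sup>+ z. ennreal (P0.psi z) \<partial>P0.JB) = (\<Sum>\<omega>\<in>P0.\<Omega>. \<integral>\<^sup>+ t. ennreal (P0.psi (\<omega>, t)) \<partial>AB0)"
    by (rule P0.nn_J) simp
  also have "\<dots> = (\<integral>\<^sup>+ t. (\<Sum>\<omega>\<in>P0.\<Omega>. ennreal (P0.psi (\<omega>, t))) \<partial>AB0)"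
    by (rule nn_integral_sum[symmetric]) (use fin in measurable)
  also have "\<dots> = (\<integral>\<^sup>+ t. ennreal (2 * 2 ^ nb * ZLs (restrict t \<Lambda>)) \<partial>AB0)"
    using P0.AE_psi_nonneg AE_bc1 AE_Zfree
  proof (intro nn_integral_cong_AE, eventually_elim)
    case (elim t)
    have "(\<Sum>\<omega>\<in>P0.\<Omega>. ennreal (P0.psi (\<omega>, t))) = ennreal (\<Sum>\<omega>\<in>P0.\<Omega>. P0.psi (\<omega>, t))"
      using elim by (intro sum_ennreal) auto
    also have "(\<Sum>\<omega>\<in>P0.\<Omega>. P0.psi (\<omega>, t)) = 2 * 2 ^ nb * ZLs (restrict t \<Lambda>)"
      unfolding ES_concrete[OF fin free_partition] using elim by simp
    finally show ?case .
  qed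
  also have "\<dots> = (\<integral>\<^sup>+ s. ennreal (2 * 2 ^ nb * ZLs s) \<partial>distr AB0 (PB \<Lambda>) (\<lambda>t. restrict t \<Lambda>))"
    by (rule nn_integral_distr[symmetric, OF restr_meas]) measurable
  also have "\<dots> = (\<integral>\<^sup>+ s. ennreal (2 * 2 ^ nb) * ennreal (ZLs s) \<partial>RT g a \<Lambda>)"
    unfolding A_base_restr[OF g fin] by (rule nn_integral_cong, rule ennreal_mult) (auto simp: ZL_nonneg)
  also have "\<dots> = ennreal (2 * 2 ^ nb) * Iz"
    by (rule nn_integral_cmult) measurable
  finally show ?thesis by (simp add: enn2real_mult)
qed

lemma Zn_eq: "2 ^ card \<Lambda> * Zn = enn2real Iz"
proof -
  let ?X = "(\<integral>\<^sup>+ \<phi>. ennreal (nu_weight \<Lambda> \<beta> h \<phi>) \<partial>RL g a \<Lambda>)"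
  have z: "Zn = enn2real ?X"
    by (rule integral_eq_nn_integral) (auto simp: nu_weight_pos less_imp_le)
  have "2 ^ card \<Lambda> * (\<integral>\<^sup>+ \<phi>. (\<lambda>_. 1) (absm \<Lambda> \<phi>) * ennreal (nu_weight \<Lambda> \<beta> h \<phi>) \<partial>RL g a \<Lambda>)
      = (\<integral>\<^sup>+ s. (\<lambda>_. 1) s * ennreal (ZLs s) \<partial>RT g a \<Lambda>)"
    by (rule sym_int[OF g fin]) simp
  moreover have "(2::ennreal) ^ card \<Lambda> = ennreal (2 ^ card \<Lambda>)"
    by (simp add: ennreal_power[symmetric])
  ultimately have e: "ennreal (2 ^ card \<Lambda>) * ?X = Iz" by simp
  have "enn2real Iz = enn2real (ennreal (2 ^ card \<Lambda>)) * enn2real ?X"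
    unfolding e[symmetric] by (rule enn2real_mult)
  then show ?thesis using z by simp
qed

lemma lhs_density:
  "distr P0.mu0 (PB \<Lambda>) (\<lambda>t. restrict t \<Lambda>)
     = density (RT g a \<Lambda>) (\<lambda>s. ennreal (2 * 2 ^ nb * ZLs s / ZP0))"
proof -
  define K where "K = (\<lambda>s. ennreal (2 * 2 ^ nb * ZLs s / ZP0))"
  have Km[measurable]: "K \<in> borel_measurable (PB \<Lambda>)" unfolding K_def by measurable
  have "P0.mu0 = density AB0 P0.Gd" by (rule P0.claim2)
  also have "\<dots> = density AB0 (\<lambda>t. K (restrict t \<Lambda>))"
  proof (rule density_cong)
    show "P0.Gd \<in> borel_measurable AB0" by (rule P0.Gd_meas)
    show "(\<lambda>t. K (restrict t \<Lambda>)) \<in> borel_measurable AB0"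
      by (rule measurable_compose[OF restr_meas Km])
    show "AE t in AB0. P0.Gd t = K (restrict t \<Lambda>)"
      using AE_bc1 AE_Zfree by eventually_elim (simp add: P0.Gd_def K_def mult.assoc)
  qed
  finally have "distr P0.mu0 (PB \<Lambda>) (\<lambda>t. restrict t \<Lambda>)
      = distr (density AB0 (\<lambda>t. K (restrict t \<Lambda>))) (PB \<Lambda>) (\<lambda>t. restrict t \<Lambda>)" by simp
  also have "\<dots> = density (distr AB0 (PB \<Lambda>) (\<lambda>t. restrict t \<Lambda>)) K"
    by (rule density_distr[symmetric, OF Km restr_meas])
  also have "\<dots> = density (RT g a \<Lambda>) K" by (simp add: A_base_restr[OF g fin])
  finally show ?thesis by (simp add: K_def)
qed

lemma Zn_nonneg: "0 \<le> Zn"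
  by (rule integral_nonneg_AE) (simp add: nu_weight_pos less_imp_le)

lemma rhs_density:
  "distr (nu g a \<Lambda> \<beta> h) (PB \<Lambda>) (\<lambda>\<phi>. \<lambda>x\<in>\<Lambda>. \<bar>\<phi> x\<bar>)
     = density (RT g a \<Lambda>) (\<lambda>s. ennreal (ZLs s / (2 ^ card \<Lambda> * Zn)))"
proof (rule measure_eqI)
  show "sets (distr (nu g a \<Lambda> \<beta> h) (PB \<Lambda>) (\<lambda>\<phi>. \<lambda>x\<in>\<Lambda>. \<bar>\<phi> x\<bar>))
      = sets (density (RT g a \<Lambda>) (\<lambda>s. ennreal (ZLs s / (2 ^ card \<Lambda> * Zn))))"
    by (simp add: sets_RT)
  fix A assume "A \<in> sets (distr (nu g a \<Lambda> \<beta> h) (PB \<Lambda>) (\<lambda>\<phi>. \<lambda>x\<in>\<Lambda>. \<bar>\<phi> x\<bar>))"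
  then have A[measurable]: "A \<in> sets (PB \<Lambda>)" by simp
  let ?w = "nu_weight \<Lambda> \<beta> h"
  have nu_eq: "nu g a \<Lambda> \<beta> h = density (RL g a \<Lambda>) (\<lambda>\<phi>. ennreal (?w \<phi> / Zn))"
    by (simp add: nu_def)
  have am: "absm \<Lambda> \<in> measurable (nu g a \<Lambda> \<beta> h) (PB \<Lambda>)"
  proof -
    have "measurable (nu g a \<Lambda> \<beta> h) (PB \<Lambda>) = measurable (RL g a \<Lambda>) (PB \<Lambda>)"
      unfolding nu_eq by (rule measurable_cong_sets) simp_all
    then show ?thesis using absm_meas by simp
  qed
  have pre[measurable]: "absm \<Lambda> -` A \<inter> space (RL g a \<Lambda>) \<in> sets (RL g a \<Lambda>)"
    by (rule measurable_sets[OF absm_meas A])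
  define X where "X = (\<integral>\<^sup>+ \<phi>. (indicator A (absm \<Lambda> \<phi>) * ennreal (1 / Zn)) * ennreal (?w \<phi>) \<partial>RL g a \<Lambda>)"
  have "emeasure (distr (nu g a \<Lambda> \<beta> h) (PB \<Lambda>) (\<lambda>\<phi>. \<lambda>x\<in>\<Lambda>. \<bar>\<phi> x\<bar>)) A
      = emeasure (distr (nu g a \<Lambda> \<beta> h) (PB \<Lambda>) (absm \<Lambda>)) A"
    by (simp add: absm_def[abs_def])
  also have "\<dots> = emeasure (nu g a \<Lambda> \<beta> h) (absm \<Lambda> -` A \<inter> space (nu g a \<Lambda> \<beta> h))"
    by (rule emeasure_distr[OF am A])
  also have "\<dots> = (\<integral>\<^sup>+ \<phi>. ennreal (?w \<phi> / Zn) * indicator (absm \<Lambda> -` A \<inter> space (RL g a \<Lambda>)) \<phi> \<partial>RL g a \<Lambda>)"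
    unfolding nu_eq by (subst emeasure_density) simp_all
  also have "\<dots> = X"
    unfolding X_def
  proof (rule nn_integral_cong)
    fix \<phi> assume "\<phi> \<in> space (RL g a \<Lambda>)"
    moreover have "ennreal (?w \<phi> / Zn) = ennreal (?w \<phi>) * ennreal (1 / Zn)"
      by (subst ennreal_mult'[symmetric]) (simp_all add: nu_weight_pos less_imp_le)
    ultimately show "ennreal (?w \<phi> / Zn) * indicator (absm \<Lambda> -` A \<inter> space (RL g a \<Lambda>)) \<phi>
        = indicator A (absm \<Lambda> \<phi>) * ennreal (1 / Zn) * ennreal (?w \<phi>)"
      by (simp add: indicator_def mult_ac)
  qed
  finally have L: "emeasure (distr (nu g a \<Lambda> \<beta> h) (PB \<Lambda>) (\<lambda>\<phi>. \<lambda>x\<in>\<Lambda>. \<bar>\<phi> x\<bar>)) A = X" .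
  have Y: "2 ^ card \<Lambda> * X = (\<integral>\<^sup>+ s. (indicator A s * ennreal (1 / Zn)) * ennreal (ZLs s) \<partial>RT g a \<Lambda>)"
    unfolding X_def by (rule sym_int[OF g fin]) measurable
  have "emeasure (density (RT g a \<Lambda>) (\<lambda>s. ennreal (ZLs s / (2 ^ card \<Lambda> * Zn)))) A
      = (\<integral>\<^sup>+ s. ennreal (ZLs s / (2 ^ card \<Lambda> * Zn)) * indicator A s \<partial>RT g a \<Lambda>)"
    by (rule emeasure_density) (simp_all add: sets_RT)
  also have "\<dots> = (\<integral>\<^sup>+ s. ennreal (1 / 2 ^ card \<Lambda>) * ((indicator A s * ennreal (1 / Zn)) * ennreal (ZLs s)) \<partial>RT g a \<Lambda>)"
  proof (rule nn_integral_cong)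
    fix s
    have "ennreal (ZLs s / (2 ^ card \<Lambda> * Zn)) = ennreal (1 / 2 ^ card \<Lambda>) * (ennreal (1 / Zn) * ennreal (ZLs s))"
      using Zn_nonneg ZL_nonneg[of s] by (simp add: ennreal_mult[symmetric])
    then show "ennreal (ZLs s / (2 ^ card \<Lambda> * Zn)) * indicator A s
        = ennreal (1 / 2 ^ card \<Lambda>) * ((indicator A s * ennreal (1 / Zn)) * ennreal (ZLs s))"
      by (simp add: mult_ac)
  qed
  also have "\<dots> = ennreal (1 / 2 ^ card \<Lambda>) * (2 ^ card \<Lambda> * X)"
    unfolding Y by (rule nn_integral_cmult) measurable
  also have "\<dots> = X"
  proof -
    have "(2::ennreal) ^ card \<Lambda> = ennreal (2 ^ card \<Lambda>)" by (simp add: ennreal_power[symmetric])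
    then have "ennreal (1 / 2 ^ card \<Lambda>) * 2 ^ card \<Lambda> = 1"
      by (simp add: ennreal_mult[symmetric])
    then show ?thesis by (simp add: mult.assoc[symmetric])
  qed
  finally show "emeasure (distr (nu g a \<Lambda> \<beta> h) (PB \<Lambda>) (\<lambda>\<phi>. \<lambda>x\<in>\<Lambda>. \<bar>\<phi> x\<bar>)) A
      = emeasure (density (RT g a \<Lambda>) (\<lambda>s. ennreal (ZLs s / (2 ^ card \<Lambda> * Zn)))) A"
    using L by simp
qed

lemma claim3:
  "distr P0.mu0 (PB \<Lambda>) (\<lambda>t. restrict t \<Lambda>) = distr (nu g a \<Lambda> \<beta> h) (PB \<Lambda>) (\<lambda>\<phi>. \<lambda>x\<in>\<Lambda>. \<bar>\<phi> x\<bar>)"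
proof -
  have "(\<lambda>s. ennreal (2 * 2 ^ nb * ZLs s / ZP0)) = (\<lambda>s. ennreal (ZLs s / (2 ^ card \<Lambda> * Zn)))"
  proof
    fix s
    have "2 * 2 ^ nb * ZLs s / ZP0 = (2 * 2 ^ nb) * ZLs s / ((2 * 2 ^ nb) * enn2real Iz)"
      unfolding ZP0_eq by simp
    also have "\<dots> = ZLs s / enn2real Iz"
      by (rule mult_divide_mult_cancel_left) simp
    also have "\<dots> = ZLs s / (2 ^ card \<Lambda> * Zn)" unfolding Zn_eq ..
    finally show "ennreal (2 * 2 ^ nb * ZLs s / ZP0) = ennreal (ZLs s / (2 ^ card \<Lambda> * Zn))" by simp
  qed
  then show ?thesis unfolding lhs_density rhs_density by simp
qed

end

theorem proposition4p6:
  fixes g a \<beta> :: real and \<Lambda> :: "'d::finite site set"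
    and \<xi> :: "'d site set set" and b h :: "'d site \<Rightarrow> real"
  assumes "g > 0"
    and "finite \<Lambda>"
    and "partition_on (ext_bd \<Lambda>) \<xi>"
    and "\<forall>x\<in>ext_bd \<Lambda>. b x \<ge> 0"
    and "\<forall>x\<in>\<Lambda>. h x \<ge> 0"
    and "\<beta> \<ge> 0"
  shows "(\<forall>\<omega>\<in>configs (all_edges \<Lambda> h). \<forall>A\<in>sets (A_base g a \<Lambda> b).
            emeasure (Psi g a \<Lambda> \<xi> b \<beta> h) ({\<omega>} \<times> A)
              = (\<integral>\<^sup>+ t\<in>A. ennreal (phiFK \<Lambda> \<xi> \<beta> h t \<omega>) \<partial>mu g a \<Lambda> \<xi> b \<beta> h))
       \<and> mu g a \<Lambda> \<xi> b \<beta> h = density (A_base g a \<Lambda> b)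
            (\<lambda>t. ennreal (2 * bc_ind \<Lambda> b t * Z_Ising \<Lambda> \<xi> \<beta> h t / Z_Psi g a \<Lambda> \<xi> b \<beta> h))
       \<and> distr (mu g a \<Lambda> (free_xi \<Lambda>) free_b \<beta> h) (PiM \<Lambda> (\<lambda>_. borel)) (\<lambda>t. restrict t \<Lambda>)
           = distr (nu g a \<Lambda> \<beta> h) (PiM \<Lambda> (\<lambda>_. borel)) (\<lambda>\<phi>. \<lambda>x\<in>\<Lambda>. \<bar>\<phi> x\<bar>)"
proof -
  interpret S: PS g a \<Lambda> \<xi> b h \<beta>
    by unfold_locales (use assms in auto)
  interpret F: PF g a \<Lambda> h \<beta>
    by unfold_locales (use assms in auto)
  show ?thesis using S.claim1 S.claim2 F.claim3 by (auto simp: S.Gd_def[abs_def])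
qed

end
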